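(* For every integer $n\geq 1$ and every admissible matrix $\Theta$, the $K_0$ group of the noncommutative $\mathbb{R}^{2n}$ satisfies $K_0(A(\mathbb{R}^{2n}_\Theta))\cong\mathbb{Z}$.
   Context: Let $\Theta=(\theta_{pq})_{1\leq p,q\leq 2n}$ be a real skew-symmetric matrix with $\theta_{2m-1,2m}=-\theta_{2m,2m-1}>0$ for $m=1,\dots,n$ and all other entries $0$. The noncommutative $\mathbb{R}^{2n}$, $A(\mathbb{R}^{2n}_\Theta)$, is the unital $*$-algebra generated by $2n$ self-adjoint elements $x_1,\dots,x_{2n}$ subject to $[x_p,x_q]=x_px_q-x_qx_p=-i\theta_{pq}$ for all $p,q$ (so $[x_{2m-1},x_{2m}]=-i\theta_{2m-1,2m}$ and all other pairs commute); every element is a finite sum $\sum a_{p_1,\dots,p_{2n}}x_1^{p_1}\cdots x_{2n}^{p_{2n}}$ with complex coefficients (these ordered monomials being linearly independent), $x_j^0=1$. A projector over a $*$-algebra $A$ is a square matrix $p$ with entries in $A$ satisfying $p^2=p=p^*$. Projectors $p,q$ are equivalent if for some $N$ there is a unitary $u\in M_N(A)$ with $\mathrm{diag}(p,0)=u\,\mathrm{diag}(q,0)\,u^*$. Equivalence classes form a semigroup under $p+q:=\mathrm{diag}(p,q)$, and $K_0(A)$ is its Grothendieck group. *)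

theory Defs
  imports Complex_Main "HOL-Algebra.Elementary_Groups"
begin

text \<open>Generators are x_1,...,x_{2n} (1-based, as in the paper).  An exponent vector
  alpha :: nat => nat (alpha p = exponent of x_p) stands for the ordered monomial
  x_1^{alpha 1} ... x_{2n}^{alpha 2n}.  An element of the algebra is its (finitely
  supported) coefficient function on exponent vectors supported in {1..2n}.\<close>

type_synonym nc_elem = "(nat \<Rightarrow> nat) \<Rightarrow> complex"
type_synonym nc_mat = "nat \<Rightarrow> nat \<Rightarrow> nc_elem"

definition admissible :: "nat \<Rightarrow> (nat \<Rightarrow> nat \<Rightarrow> real) \<Rightarrow> bool" where
  "admissible n \<Theta> \<longleftrightarrow>
     (\<forall>p\<in>{1..2*n}. \<forall>q\<in>{1..2*n}. \<Theta> p q = - \<Theta> q p) \<and>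
     (\<forall>m\<in>{1..n}. \<Theta> (2*m-1) (2*m) > 0) \<and>
     (\<forall>p\<in>{1..2*n}. \<forall>q\<in>{1..2*n}.
        \<not> (\<exists>m\<in>{1..n}. (p = 2*m-1 \<and> q = 2*m) \<or> (p = 2*m \<and> q = 2*m-1)) \<longrightarrow> \<Theta> p q = 0)"

definition nc_carrier :: "nat \<Rightarrow> nc_elem set" where
  "nc_carrier n = {f. finite {\<alpha>. f \<alpha> \<noteq> 0} \<and>
      (\<forall>\<alpha>. f \<alpha> \<noteq> 0 \<longrightarrow> (\<forall>p. \<alpha> p \<noteq> 0 \<longrightarrow> p \<in> {1..2*n}))}"

definition nc_zero :: nc_elem where "nc_zero = (\<lambda>_. 0)"

definition nc_one :: nc_elem where "nc_one = (\<lambda>\<gamma>. if \<gamma> = (\<lambda>_. 0) then 1 else 0)"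

definition nc_add :: "nc_elem \<Rightarrow> nc_elem \<Rightarrow> nc_elem" where
  "nc_add f g = (\<lambda>\<gamma>. f \<gamma> + g \<gamma>)"

text \<open>Distinct pairs (x_{2m-1}, x_{2m}) commute, and within a pair, writing X = x_{2m-1},
  Y = x_{2m}, theta = Theta(2m-1,2m), one has [Y,X] = i theta (central), hence
  (X^a Y^b)(X^c Y^d) = sum_k k! C(b,k) C(c,k) (i theta)^k X^(a+c-k) Y^(b+d-k).\<close>

definition mono_mult :: "nat \<Rightarrow> (nat \<Rightarrow> nat \<Rightarrow> real) \<Rightarrow> (nat \<Rightarrow> nat) \<Rightarrow> (nat \<Rightarrow> nat) \<Rightarrow> nc_elem" where
  "mono_mult n \<Theta> \<alpha> \<beta> = (\<lambda>\<gamma>.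
     \<Sum>k\<in>{k. \<forall>m. k m \<le> (if m \<in> {1..n} then min (\<alpha> (2*m)) (\<beta> (2*m-1)) else 0)}.
        (if \<gamma> = (\<lambda>p. \<alpha> p + \<beta> p - k ((p+1) div 2)) then
           (\<Prod>m\<in>{1..n}. of_nat (fact (k m) * (\<alpha> (2*m) choose k m) * (\<beta> (2*m-1) choose k m))
                           * (\<i> * complex_of_real (\<Theta> (2*m-1) (2*m))) ^ k m)
         else 0))"

definition nc_mult :: "nat \<Rightarrow> (nat \<Rightarrow> nat \<Rightarrow> real) \<Rightarrow> nc_elem \<Rightarrow> nc_elem \<Rightarrow> nc_elem" where
  "nc_mult n \<Theta> f g = (\<lambda>\<gamma>. \<Sum>\<alpha>\<in>{\<alpha>. f \<alpha> \<noteq> 0}. \<Sum>\<beta>\<in>{\<beta>. g \<beta> \<noteq> 0}.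
       f \<alpha> * g \<beta> * mono_mult n \<Theta> \<alpha> \<beta> \<gamma>)"

text \<open>Involution: the x_p are self-adjoint, so (x^alpha)^* is the reversed product
  x_{2n}^{alpha 2n} ... x_1^{alpha 1}, which (pairs commuting) equals
  x^{even part of alpha} * x^{odd part of alpha}; coefficients are conjugated.\<close>

definition nc_star :: "nat \<Rightarrow> (nat \<Rightarrow> nat \<Rightarrow> real) \<Rightarrow> nc_elem \<Rightarrow> nc_elem" where
  "nc_star n \<Theta> f = (\<lambda>\<gamma>. \<Sum>\<alpha>\<in>{\<alpha>. f \<alpha> \<noteq> 0}.
       cnj (f \<alpha>) * mono_mult n \<Theta> (\<lambda>p. if even p then \<alpha> p else 0)
                                   (\<lambda>p. if odd p then \<alpha> p else 0) \<gamma>)"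

text \<open>A K x K matrix is a function nat => nat => element, with entries in the algebra
  for indices below K and zero elsewhere (so diag(p,0) is p itself, viewed at a larger size).\<close>

definition is_mat :: "nat \<Rightarrow> nat \<Rightarrow> nc_mat \<Rightarrow> bool" where
  "is_mat n K P \<longleftrightarrow> (\<forall>i j. (i < K \<and> j < K \<longrightarrow> P i j \<in> nc_carrier n) \<and>
                            (\<not> (i < K \<and> j < K) \<longrightarrow> P i j = nc_zero))"

definition mat_mult :: "nat \<Rightarrow> (nat \<Rightarrow> nat \<Rightarrow> real) \<Rightarrow> nat \<Rightarrow> nc_mat \<Rightarrow> nc_mat \<Rightarrow> nc_mat" where
  "mat_mult n \<Theta> K P Q = (\<lambda>i j \<gamma>. \<Sum>l<K. nc_mult n \<Theta> (P i l) (Q l j) \<gamma>)"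

definition mat_star :: "nat \<Rightarrow> (nat \<Rightarrow> nat \<Rightarrow> real) \<Rightarrow> nc_mat \<Rightarrow> nc_mat" where
  "mat_star n \<Theta> P = (\<lambda>i j. nc_star n \<Theta> (P j i))"

definition mat_id :: "nat \<Rightarrow> nc_mat" where
  "mat_id K = (\<lambda>i j. if i = j \<and> i < K then nc_one else nc_zero)"

definition is_unitary :: "nat \<Rightarrow> (nat \<Rightarrow> nat \<Rightarrow> real) \<Rightarrow> nat \<Rightarrow> nc_mat \<Rightarrow> bool" where
  "is_unitary n \<Theta> K U \<longleftrightarrow> is_mat n K U \<and>
     mat_mult n \<Theta> K U (mat_star n \<Theta> U) = mat_id K \<and>
     mat_mult n \<Theta> K (mat_star n \<Theta> U) U = mat_id K"

definition projectors :: "nat \<Rightarrow> (nat \<Rightarrow> nat \<Rightarrow> real) \<Rightarrow> (nat \<times> nc_mat) set" where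
  "projectors n \<Theta> = {(N, P). is_mat n N P \<and> mat_mult n \<Theta> N P P = P \<and> mat_star n \<Theta> P = P}"

definition proj_equiv :: "nat \<Rightarrow> (nat \<Rightarrow> nat \<Rightarrow> real) \<Rightarrow> nat \<times> nc_mat \<Rightarrow> nat \<times> nc_mat \<Rightarrow> bool" where
  "proj_equiv n \<Theta> p q \<longleftrightarrow> (\<exists>K U. fst p \<le> K \<and> fst q \<le> K \<and> is_unitary n \<Theta> K U \<and>
       snd p = mat_mult n \<Theta> K (mat_mult n \<Theta> K U (snd q)) (mat_star n \<Theta> U))"

definition proj_sum :: "nat \<times> nc_mat \<Rightarrow> nat \<times> nc_mat \<Rightarrow> nat \<times> nc_mat" where
  "proj_sum p q = (fst p + fst q, (\<lambda>i j.
      if i < fst p \<and> j < fst p then snd p i j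
      else if fst p \<le> i \<and> i < fst p + fst q \<and> fst p \<le> j \<and> j < fst p + fst q
        then snd q (i - fst p) (j - fst p)
      else nc_zero))"

definition proj_zero :: "nat \<times> nc_mat" where
  "proj_zero = (0, \<lambda>_ _. nc_zero)"

text \<open>Formal differences [a] - [b] of classes of projectors; [a]-[b] = [c]-[d] iff
  [a]+[d]+[e] = [c]+[b]+[e] for some class [e].\<close>

definition K0_rel :: "nat \<Rightarrow> (nat \<Rightarrow> nat \<Rightarrow> real) \<Rightarrow>
    ((nat \<times> nc_mat) \<times> (nat \<times> nc_mat)) rel" where
  "K0_rel n \<Theta> = {((a, b), (c, d)).
      a \<in> projectors n \<Theta> \<and> b \<in> projectors n \<Theta> \<and> c \<in> projectors n \<Theta> \<and> d \<in> projectors n \<Theta> \<and>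
      (\<exists>e\<in>projectors n \<Theta>.
         proj_equiv n \<Theta> (proj_sum (proj_sum a d) e) (proj_sum (proj_sum c b) e))}"

definition K0 :: "nat \<Rightarrow> (nat \<Rightarrow> nat \<Rightarrow> real) \<Rightarrow>
    ((nat \<times> nc_mat) \<times> (nat \<times> nc_mat)) set monoid" where
  "K0 n \<Theta> = \<lparr>carrier = (projectors n \<Theta> \<times> projectors n \<Theta>) // K0_rel n \<Theta>,
     monoid.mult = (\<lambda>X Y. K0_rel n \<Theta> `` {(proj_sum a c, proj_sum b d) | a b c d.
                                             (a, b) \<in> X \<and> (c, d) \<in> Y}),
     one = K0_rel n \<Theta> `` {(proj_zero, proj_zero)}\<rparr>"

end

theory Submission
  imports Defs
begin


lemma finite_bounded_funs:
  assumes "finite {m. b m \<noteq> 0}"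
  shows "finite {k::nat\<Rightarrow>nat. \<forall>m. k m \<le> b m}"
proof -
  let ?D = "{m. b m \<noteq> 0}"
  have "{k::nat\<Rightarrow>nat. \<forall>m. k m \<le> b m} \<subseteq> (\<lambda>f m. if m \<in> ?D then f m else 0) ` (PiE ?D (\<lambda>m. {..b m}))"
  proof
    fix k :: "nat\<Rightarrow>nat" assume "k \<in> {k. \<forall>m. k m \<le> b m}"
    hence k: "\<forall>m. k m \<le> b m" by simp
    have "restrict k ?D \<in> PiE ?D (\<lambda>m. {..b m})" using k by auto
    moreover have "k = (\<lambda>m. if m \<in> ?D then restrict k ?D m else 0)"
      using k by (auto simp: fun_eq_iff) (metis le_zero_eq)
    ultimately show "k \<in> (\<lambda>f m. if m \<in> ?D then f m else 0) ` (PiE ?D (\<lambda>m. {..b m}))" by blast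
  qed
  moreover have "finite (PiE ?D (\<lambda>m. {..b m}))" using assms by (intro finite_PiE) auto
  ultimately show ?thesis by (meson finite_surj)
qed

definition kset :: "nat \<Rightarrow> (nat \<Rightarrow> nat) \<Rightarrow> (nat \<Rightarrow> nat) \<Rightarrow> (nat \<Rightarrow> nat) set" where
  "kset n \<alpha> \<beta> = {k. \<forall>m. k m \<le> (if m \<in> {1..n} then min (\<alpha> (2*m)) (\<beta> (2*m-1)) else 0)}"

lemma finite_kset: "finite (kset n \<alpha> \<beta>)"
  unfolding kset_def
  by (rule finite_bounded_funs) (rule finite_subset[of _ "{1..n}"], auto split: if_splits)

lemma zero_in_kset: "(\<lambda>_. 0) \<in> kset n \<alpha> \<beta>"
  by (simp add: kset_def)

definition mmcoef :: "nat \<Rightarrow> (nat \<Rightarrow> nat \<Rightarrow> real) \<Rightarrow> (nat \<Rightarrow> nat) \<Rightarrow> (nat \<Rightarrow> nat) \<Rightarrow> (nat \<Rightarrow> nat) \<Rightarrow> complex" where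
  "mmcoef n \<Theta> \<alpha> \<beta> k = (\<Prod>m\<in>{1..n}. of_nat (fact (k m) * (\<alpha> (2*m) choose k m) * (\<beta> (2*m-1) choose k m))
                           * (\<i> * complex_of_real (\<Theta> (2*m-1) (2*m))) ^ k m)"

definition mmterm :: "nat \<Rightarrow> (nat \<Rightarrow> nat \<Rightarrow> real) \<Rightarrow> (nat \<Rightarrow> nat) \<Rightarrow> (nat \<Rightarrow> nat) \<Rightarrow> (nat \<Rightarrow> nat) \<Rightarrow> (nat \<Rightarrow> nat) \<Rightarrow> complex" where
  "mmterm n \<Theta> \<alpha> \<beta> \<gamma> k = (if \<gamma> = (\<lambda>p. \<alpha> p + \<beta> p - k ((p+1) div 2)) then mmcoef n \<Theta> \<alpha> \<beta> k else 0)"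

lemma mono_mult_kset: "mono_mult n \<Theta> \<alpha> \<beta> \<gamma> = (\<Sum>k\<in>kset n \<alpha> \<beta>. mmterm n \<Theta> \<alpha> \<beta> \<gamma> k)"
  unfolding mono_mult_def kset_def mmterm_def mmcoef_def by simp

lemma mmcoef_0: "mmcoef n \<Theta> \<alpha> \<beta> (\<lambda>_. 0) = 1"
  unfolding mmcoef_def by simp

lemma mono_mult_nz_le:
  assumes "mono_mult n \<Theta> \<alpha> \<beta> \<gamma> \<noteq> 0"
  shows "\<gamma> p \<le> \<alpha> p + \<beta> p"
proof -
  from assms obtain k where "k \<in> kset n \<alpha> \<beta>" "mmterm n \<Theta> \<alpha> \<beta> \<gamma> k \<noteq> 0"
    unfolding mono_mult_kset by (meson sum.neutral)
  hence "\<gamma> = (\<lambda>p. \<alpha> p + \<beta> p - k ((p+1) div 2))" unfolding mmterm_def by (simp split: if_splits)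
  thus ?thesis by simp
qed

lemma mono_mult_nz_le_all:
  "mono_mult n \<Theta> \<alpha> \<beta> \<gamma> \<noteq> 0 \<Longrightarrow> \<forall>p. \<gamma> p \<le> \<alpha> p + \<beta> p"
  using mono_mult_nz_le by blast

lemma sum_single:
  assumes "finite A" "\<And>x. x \<in> A \<Longrightarrow> x \<noteq> a \<Longrightarrow> f x = 0"
  shows "sum f A = (if a \<in> A then f a else 0)"
proof (cases "a \<in> A")
  case True
  have "sum f A = f a + sum f (A - {a})" using assms(1) True by (simp add: sum.remove)
  also have "sum f (A - {a}) = 0" using assms(2) by (intro sum.neutral) auto
  finally show ?thesis using True by simp
next
  case False thus ?thesis using assms by (auto intro: sum.neutral)
qed

lemma mono_mult_top: "mono_mult n \<Theta> \<alpha> \<beta> (\<lambda>p. \<alpha> p + \<beta> p) = 1"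
proof -
  have "mono_mult n \<Theta> \<alpha> \<beta> (\<lambda>p. \<alpha> p + \<beta> p) =
    (if (\<lambda>_. 0) \<in> kset n \<alpha> \<beta> then mmterm n \<Theta> \<alpha> \<beta> (\<lambda>p. \<alpha> p + \<beta> p) (\<lambda>_. 0) else 0)"
    unfolding mono_mult_kset
  proof (rule sum_single[OF finite_kset])
    fix k assume k: "k \<in> kset n \<alpha> \<beta>" "k \<noteq> (\<lambda>_. 0)"
    then obtain m where m: "k m \<noteq> 0" by auto
    with k(1) have m1: "m \<in> {1..n}" and km: "k m \<le> \<alpha> (2*m)"
      unfolding kset_def by (auto split: if_splits dest!: spec[of _ m])
    have "(2*m+1) div 2 = m" by simp
    hence "(\<lambda>p. \<alpha> p + \<beta> p - k ((p+1) div 2)) (2*m) \<noteq> \<alpha> (2*m) + \<beta> (2*m)"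
      using m km by simp
    hence "(\<lambda>p. \<alpha> p + \<beta> p) \<noteq> (\<lambda>p. \<alpha> p + \<beta> p - k ((p+1) div 2))" by metis
    thus "mmterm n \<Theta> \<alpha> \<beta> (\<lambda>p. \<alpha> p + \<beta> p) k = 0" unfolding mmterm_def by simp
  qed
  moreover have "mmterm n \<Theta> \<alpha> \<beta> (\<lambda>p. \<alpha> p + \<beta> p) (\<lambda>_. 0) = 1"
    unfolding mmterm_def mmcoef_0 by simp
  ultimately show ?thesis using zero_in_kset by simp
qed

definition cst :: "complex \<Rightarrow> nc_elem" where
  "cst c = (\<lambda>\<gamma>. if \<gamma> = (\<lambda>_. 0) then c else 0)"

lemma mono_mult_00: "mono_mult n \<Theta> (\<lambda>_. 0) (\<lambda>_. 0) \<gamma> = cst 1 \<gamma>"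
proof -
  have "kset n (\<lambda>_. 0) (\<lambda>_. 0) = {\<lambda>_. 0}" by (auto simp: kset_def)
  thus ?thesis unfolding mono_mult_kset cst_def mmterm_def by (simp add: mmcoef_0)
qed

lemma supp_cst: "{\<alpha>. cst c \<alpha> \<noteq> 0} = (if c = 0 then {} else {\<lambda>_. 0})"
  by (auto simp: cst_def)

lemma nc_mult_cst: "nc_mult n \<Theta> (cst a) (cst b) = cst (a * b)"
proof (rule ext)
  fix \<gamma>
  show "nc_mult n \<Theta> (cst a) (cst b) \<gamma> = cst (a * b) \<gamma>"
  proof (cases "a = 0 \<or> b = 0")
    case True thus ?thesis unfolding nc_mult_def supp_cst by (auto simp: cst_def)
  next
    case False
    hence "nc_mult n \<Theta> (cst a) (cst b) \<gamma> = a * b * mono_mult n \<Theta> (\<lambda>_. 0) (\<lambda>_. 0) \<gamma>"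
      unfolding nc_mult_def supp_cst by (simp add: cst_def)
    thus ?thesis by (simp add: mono_mult_00 cst_def)
  qed
qed

lemma nc_star_cst: "nc_star n \<Theta> (cst a) = cst (cnj a)"
proof (rule ext)
  fix \<gamma>
  have e: "(\<lambda>p. if even p then (0::nat) else 0) = (\<lambda>_. 0)" "(\<lambda>p. if odd p then (0::nat) else 0) = (\<lambda>_. 0)" by auto
  show "nc_star n \<Theta> (cst a) \<gamma> = cst (cnj a) \<gamma>"
  proof (cases "a = 0")
    case True thus ?thesis unfolding nc_star_def supp_cst by (auto simp: cst_def)
  next
    case False
    hence "nc_star n \<Theta> (cst a) \<gamma> = cnj a * mono_mult n \<Theta> (\<lambda>_. 0) (\<lambda>_. 0) \<gamma>"
      unfolding nc_star_def supp_cst by (simp add: cst_def e)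
    thus ?thesis by (simp add: mono_mult_00 cst_def)
  qed
qed

lemma nc_zero_cst: "nc_zero = cst 0" and nc_one_cst: "nc_one = cst 1"
  by (auto simp: nc_zero_def nc_one_def cst_def fun_eq_iff)

lemma cst_carrier: "cst c \<in> nc_carrier n"
  unfolding nc_carrier_def supp_cst by (auto simp: cst_def)

lemma cst_inj: "cst a = cst b \<longleftrightarrow> a = b"
  by (auto simp: cst_def fun_eq_iff dest: spec[of _ "\<lambda>_. 0"])


lemma base_inj:
  fixes B :: nat
  assumes "\<forall>p\<le>m. a p < B" "\<forall>p\<le>m. b p < B"
    and "(\<Sum>p\<le>m. a p * B ^ p) = (\<Sum>p\<le>m. b p * B ^ p)"
  shows "\<forall>p\<le>m. a p = b p"
  using assms
proof (induction m arbitrary: a b)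
  case 0 thus ?case by simp
next
  case (Suc m)
  have e: "(\<Sum>p\<le>Suc m. c p * B ^ p) = c 0 + B * (\<Sum>p\<le>m. c (Suc p) * B ^ p)" for c
    unfolding sum.atMost_Suc_shift by (simp add: sum_distrib_left mult_ac del: sum.atMost_Suc)
  define X where "X = (\<Sum>p\<le>m. a (Suc p) * B ^ p)"
  define Y where "Y = (\<Sum>p\<le>m. b (Suc p) * B ^ p)"
  have eq: "a 0 + B * X = b 0 + B * Y" using Suc.prems(3) unfolding e X_def Y_def .
  have a0: "a 0 < B" "b 0 < B" using Suc.prems by auto
  have "(a 0 + B * X) mod B = a 0" "(b 0 + B * Y) mod B = b 0" using a0 by auto
  hence h0: "a 0 = b 0" using eq by metis
  have "B * X = B * Y" using eq h0 by simp
  moreover have "B \<noteq> 0" using a0 by simp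
  ultimately have "X = Y" by (rule mult_left_cancel[THEN iffD1, rotated])
  moreover have "\<forall>p\<le>m. a (Suc p) < B" using Suc.prems(1) by simp
  moreover have "\<forall>p\<le>m. b (Suc p) < B" using Suc.prems(2) by simp
  ultimately have "\<forall>p\<le>m. a (Suc p) = b (Suc p)"
    using Suc.IH[of "\<lambda>p. a (Suc p)" "\<lambda>p. b (Suc p)"] unfolding X_def Y_def by blast
  note hs = this
  show ?case
  proof (intro allI impI)
    fix p assume p: "p \<le> Suc m"
    show "a p = b p"
    proof (cases p)
      case 0 thus ?thesis using h0 by simp
    next
      case (Suc q) thus ?thesis using hs p by simp
    qed
  qed
qed

lemma star_supp:
  assumes "nc_star n \<Theta> f \<gamma> \<noteq> 0"
  shows "\<exists>\<alpha>. f \<alpha> \<noteq> 0 \<and> (\<forall>p. \<gamma> p \<le> \<alpha> p)"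
proof -
  from assms obtain \<alpha> where a: "f \<alpha> \<noteq> 0"
    "cnj (f \<alpha>) * mono_mult n \<Theta> (\<lambda>p. if even p then \<alpha> p else 0) (\<lambda>p. if odd p then \<alpha> p else 0) \<gamma> \<noteq> 0"
    unfolding nc_star_def by (rule sum.not_neutral_contains_not_neutral) auto
  let ?ev = "\<lambda>p. if even p then \<alpha> p else (0::nat)"
  let ?od = "\<lambda>p. if odd p then \<alpha> p else (0::nat)"
  have "mono_mult n \<Theta> ?ev ?od \<gamma> \<noteq> 0" using a by auto
  hence "\<forall>p. \<gamma> p \<le> ?ev p + ?od p" by (rule mono_mult_nz_le_all)
  hence "\<gamma> p \<le> \<alpha> p" for p by (auto split: if_splits dest: spec[of _ p])
  thus ?thesis using a by blast
qed

lemma finite_star_supp: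
  assumes "finite {\<alpha>. f \<alpha> \<noteq> 0}" "\<And>\<alpha>. f \<alpha> \<noteq> 0 \<Longrightarrow> finite {p. \<alpha> p \<noteq> 0}"
  shows "finite {\<gamma>. nc_star n \<Theta> f \<gamma> \<noteq> 0}"
proof -
  have "{\<gamma>. nc_star n \<Theta> f \<gamma> \<noteq> 0} \<subseteq> (\<Union>\<alpha>\<in>{\<alpha>. f \<alpha> \<noteq> 0}. {\<gamma>. \<forall>p. \<gamma> p \<le> \<alpha> p})"
    using star_supp by fastforce
  moreover have "finite (\<Union>\<alpha>\<in>{\<alpha>. f \<alpha> \<noteq> 0}. {\<gamma>. \<forall>p. \<gamma> p \<le> \<alpha> p})"
    using assms finite_bounded_funs by blast
  ultimately show ?thesis by (rule finite_subset)
qed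

lemma key_entry:
  fixes w :: "(nat \<Rightarrow> nat) \<Rightarrow> nat" and G :: "(nat \<Rightarrow> nat) set"
  assumes fin: "finite {\<alpha>. f \<alpha> \<noteq> 0}"
    and finstar: "finite {\<alpha>. nc_star n \<Theta> f \<alpha> \<noteq> 0}"
    and wadd: "\<And>\<alpha> \<beta>. w (\<lambda>p. \<alpha> p + \<beta> p) = w \<alpha> + w \<beta>"
    and wmono: "\<And>\<alpha> \<beta>. (\<forall>p. \<alpha> p \<le> \<beta> p) \<Longrightarrow> w \<alpha> \<le> w \<beta>"
    and winj: "\<And>\<alpha> \<beta>. \<alpha> \<in> G \<Longrightarrow> \<beta> \<in> G \<Longrightarrow> w \<alpha> = w \<beta> \<Longrightarrow> \<alpha> = \<beta>"
    and Gdown: "\<And>\<alpha> \<gamma>. \<alpha> \<in> G \<Longrightarrow> (\<forall>p. \<gamma> p \<le> \<alpha> p) \<Longrightarrow> \<gamma> \<in> G"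
    and fG: "\<And>\<alpha>. f \<alpha> \<noteq> 0 \<Longrightarrow> \<alpha> \<in> G \<and> w \<alpha> \<le> w L"
    and LG: "L \<in> G"
  shows "nc_mult n \<Theta> (nc_star n \<Theta> f) f (\<lambda>p. L p + L p) = cnj (f L) * f L"
proof -
  let ?ev = "\<lambda>\<alpha>. (\<lambda>p. if even p then \<alpha> p else (0::nat))"
  let ?od = "\<lambda>\<alpha>. (\<lambda>p. if odd p then \<alpha> p else (0::nat))"
  define g where "g = nc_star n \<Theta> f"
  have step1: "g L = cnj (f L)"
  proof -
    have "g L = (if L \<in> {\<alpha>. f \<alpha> \<noteq> 0} then cnj (f L) * mono_mult n \<Theta> (?ev L) (?od L) L else 0)"
      unfolding g_def nc_star_def
    proof (rule sum_single[OF fin])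
      fix \<alpha> assume a: "\<alpha> \<in> {\<alpha>. f \<alpha> \<noteq> 0}" "\<alpha> \<noteq> L"
      show "cnj (f \<alpha>) * mono_mult n \<Theta> (?ev \<alpha>) (?od \<alpha>) L = 0"
      proof (rule ccontr)
        assume "cnj (f \<alpha>) * mono_mult n \<Theta> (?ev \<alpha>) (?od \<alpha>) L \<noteq> 0"
        hence "mono_mult n \<Theta> (?ev \<alpha>) (?od \<alpha>) L \<noteq> 0" by auto
        hence "\<forall>p. L p \<le> ?ev \<alpha> p + ?od \<alpha> p" by (rule mono_mult_nz_le_all)
        hence le: "\<forall>p. L p \<le> \<alpha> p" by (auto split: if_splits)
        have "w L \<le> w \<alpha>" by (rule wmono[OF le])
        moreover have "\<alpha> \<in> G" "w \<alpha> \<le> w L" using fG a by auto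
        ultimately have "\<alpha> = L" using winj LG by (metis le_antisym)
        with a show False by simp
      qed
    qed
    moreover have eqL: "(\<lambda>p. ?ev L p + ?od L p) = L" by (rule ext) simp
    have "mono_mult n \<Theta> (?ev L) (?od L) L = 1"
      using mono_mult_top[of n \<Theta> "?ev L" "?od L", unfolded eqL] .
    ultimately show ?thesis by auto
  qed
  have bound_g: "\<alpha> \<in> G \<and> w \<alpha> \<le> w L" if ga: "g \<alpha> \<noteq> 0" for \<alpha>
  proof -
    obtain \<alpha>' where "f \<alpha>' \<noteq> 0" "\<forall>p. \<alpha> p \<le> \<alpha>' p" using star_supp[of n \<Theta> f \<alpha>] ga unfolding g_def by blast
    thus ?thesis using fG Gdown wmono by (meson le_trans)
  qed
  have inner: "(\<Sum>\<beta>\<in>{\<beta>. f \<beta> \<noteq> 0}. g \<alpha> * f \<beta> * mono_mult n \<Theta> \<alpha> \<beta> (\<lambda>p. L p + L p)) =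
      (if \<alpha> = L \<and> f L \<noteq> 0 then g L * f L else 0)" if a: "g \<alpha> \<noteq> 0" for \<alpha>
  proof -
    have "(\<Sum>\<beta>\<in>{\<beta>. f \<beta> \<noteq> 0}. g \<alpha> * f \<beta> * mono_mult n \<Theta> \<alpha> \<beta> (\<lambda>p. L p + L p)) =
      (if L \<in> {\<beta>. f \<beta> \<noteq> 0} then g \<alpha> * f L * mono_mult n \<Theta> \<alpha> L (\<lambda>p. L p + L p) else 0)"
    proof (rule sum_single[OF fin])
      fix \<beta> assume b: "\<beta> \<in> {\<beta>. f \<beta> \<noteq> 0}" "\<beta> \<noteq> L"
      show "g \<alpha> * f \<beta> * mono_mult n \<Theta> \<alpha> \<beta> (\<lambda>p. L p + L p) = 0"
      proof (rule ccontr)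
        assume "g \<alpha> * f \<beta> * mono_mult n \<Theta> \<alpha> \<beta> (\<lambda>p. L p + L p) \<noteq> 0"
        hence "mono_mult n \<Theta> \<alpha> \<beta> (\<lambda>p. L p + L p) \<noteq> 0" by auto
        hence "\<forall>p. L p + L p \<le> \<alpha> p + \<beta> p" by (rule mono_mult_nz_le_all)
        hence "w (\<lambda>p. L p + L p) \<le> w (\<lambda>p. \<alpha> p + \<beta> p)" by (rule wmono)
        hence "w L + w L \<le> w \<alpha> + w \<beta>" unfolding wadd .
        moreover have "\<beta> \<in> G" "w \<beta> \<le> w L" using fG b by auto
        moreover have "w \<alpha> \<le> w L" using bound_g a by auto
        ultimately have "w \<beta> = w L" by linarith
        hence "\<beta> = L" using winj LG \<open>\<beta> \<in> G\<close> by blast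
        with b show False by simp
      qed
    qed
    also have "\<dots> = (if \<alpha> = L \<and> f L \<noteq> 0 then g L * f L else 0)"
    proof (cases "f L \<noteq> 0 \<and> mono_mult n \<Theta> \<alpha> L (\<lambda>p. L p + L p) \<noteq> 0")
      case True
      hence "\<forall>p. L p + L p \<le> \<alpha> p + L p" using mono_mult_nz_le_all by blast
      hence "\<forall>p. L p \<le> \<alpha> p" by auto
      hence "w L \<le> w \<alpha>" using wmono by blast
      hence "\<alpha> = L" using bound_g[OF a] winj LG by (metis le_antisym)
      thus ?thesis using True mono_mult_top[of n \<Theta> L L] by simp
    next
      case False
      moreover have "f L \<noteq> 0 \<Longrightarrow> \<alpha> = L \<Longrightarrow> mono_mult n \<Theta> \<alpha> L (\<lambda>p. L p + L p) \<noteq> 0"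
        using mono_mult_top[of n \<Theta> L L] by simp
      ultimately show ?thesis by auto
    qed
    finally show ?thesis .
  qed
  have "nc_mult n \<Theta> g f (\<lambda>p. L p + L p) =
     (\<Sum>\<alpha>\<in>{\<alpha>. g \<alpha> \<noteq> 0}. (if \<alpha> = L \<and> f L \<noteq> 0 then g L * f L else 0))"
    unfolding nc_mult_def using inner by (intro sum.cong) auto
  also have "\<dots> = (if L \<in> {\<alpha>. g \<alpha> \<noteq> 0} then (if L = L \<and> f L \<noteq> 0 then g L * f L else 0) else 0)"
    by (rule sum_single) (use finstar g_def in auto)
  also have "\<dots> = cnj (f L) * f L"
  proof (cases "f L = 0")
    case True thus ?thesis by simp
  next
    case False
    hence "g L \<noteq> 0" using step1 by simp
    thus ?thesis using step1 False by simp
  qed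
  finally show ?thesis unfolding g_def .
qed


lemma sum_cnj_nz:
  fixes z :: "nat \<Rightarrow> complex"
  assumes "finite A" "a \<in> A" "z a \<noteq> 0"
  shows "(\<Sum>l\<in>A. cnj (z l) * z l) \<noteq> 0"
proof -
  have e: "cnj (z l) * z l = complex_of_real ((Re (z l))\<^sup>2 + (Im (z l))\<^sup>2)" for l
    using complex_mult_cnj[of "z l"] by (simp add: mult.commute)
  have "0 < (\<Sum>l\<in>A. (Re (z l))\<^sup>2 + (Im (z l))\<^sup>2)"
  proof (rule sum_pos2[OF assms(1,2)])
    show "0 < (Re (z a))\<^sup>2 + (Im (z a))\<^sup>2" using assms(3) by (simp add: sum_power2_gt_zero_iff complex_eq_iff)
  qed auto
  moreover have "(\<Sum>l\<in>A. cnj (z l) * z l) = complex_of_real (\<Sum>l\<in>A. (Re (z l))\<^sup>2 + (Im (z l))\<^sup>2)"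
    by (simp only: e of_real_sum)
  ultimately show ?thesis by (metis less_irrefl of_real_eq_0_iff)
qed

lemma carrier_supp:
  assumes "f \<in> nc_carrier n" "f \<alpha> \<noteq> 0" "p > 2*n"
  shows "\<alpha> p = 0"
proof (rule ccontr)
  assume "\<alpha> p \<noteq> 0"
  hence "p \<in> {1..2*n}" using assms(1,2) unfolding nc_carrier_def by blast
  with assms(3) show False by simp
qed

lemma carrier_fin: "f \<in> nc_carrier n \<Longrightarrow> finite {\<alpha>. f \<alpha> \<noteq> 0}"
  unfolding nc_carrier_def by auto

lemma carrier_fin_star: "f \<in> nc_carrier n \<Longrightarrow> finite {\<alpha>. nc_star n \<Theta> f \<alpha> \<noteq> 0}"
proof (rule finite_star_supp)
  assume f: "f \<in> nc_carrier n"
  thus "finite {\<alpha>. f \<alpha> \<noteq> 0}" by (rule carrier_fin)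
  fix \<alpha> assume fa: "f \<alpha> \<noteq> 0"
  have "{p. \<alpha> p \<noteq> 0} \<subseteq> {..2*n}"
  proof
    fix p assume "p \<in> {p. \<alpha> p \<noteq> 0}"
    thus "p \<in> {..2*n}" using carrier_supp[OF f fa, of p] by (cases "p > 2*n") auto
  qed
  thus "finite {p. \<alpha> p \<noteq> 0}" by (rule finite_subset) simp
qed

lemma nonconst_witness:
  assumes M: "is_mat n K M"
    and nc: "l0 < K" "i0 < K" "\<gamma>0 \<noteq> (\<lambda>_. 0)" "M l0 i0 \<gamma>0 \<noteq> 0"
  shows "\<exists>i<K. \<exists>L. L \<noteq> (\<lambda>_. 0) \<and> (\<forall>l<K. \<forall>j<K. M l j (\<lambda>p. L p + L p) = 0) \<and>
     (\<Sum>l<K. nc_mult n \<Theta> (nc_star n \<Theta> (M l i)) (M l i) (\<lambda>p. L p + L p)) \<noteq> 0"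
proof -
  have car: "M l j \<in> nc_carrier n" if "l < K" "j < K" for l j
    using M that unfolding is_mat_def by auto
  define S where "S = (\<Union>l\<in>{..<K}. \<Union>j\<in>{..<K}. {\<alpha>. M l j \<alpha> \<noteq> 0})"
  have finS: "finite S" unfolding S_def using car carrier_fin by auto
  have g0S: "\<gamma>0 \<in> S" unfolding S_def using nc by auto
  have Ssupp: "\<alpha> p = 0" if "\<alpha> \<in> S" "p > 2*n" for \<alpha> p
    using that carrier_supp car unfolding S_def by blast
  define E where "E = Max ((\<lambda>(\<alpha>, p). \<alpha> p) ` (S \<times> {..2*n}))"
  have Ebound: "\<alpha> p \<le> E" if "\<alpha> \<in> S" for \<alpha> p
  proof (cases "p \<le> 2*n")
    case True
    have "(\<lambda>(\<alpha>, p). \<alpha> p) (\<alpha>, p) \<in> (\<lambda>(\<alpha>, p). \<alpha> p) ` (S \<times> {..2*n})" using that True by blast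
    moreover have "finite ((\<lambda>(\<alpha>, p). \<alpha> p) ` (S \<times> {..2*n}))" using finS by simp
    ultimately show ?thesis unfolding E_def by (metis (no_types, lifting) Max_ge case_prod_conv)
  next
    case False thus ?thesis using Ssupp[OF that, of p] by simp
  qed
  define B where "B = Suc E"
  define w where "w = (\<lambda>\<alpha>::nat\<Rightarrow>nat. \<Sum>p\<le>2*n. \<alpha> p * B ^ p)"
  define G where "G = {\<alpha>::nat\<Rightarrow>nat. (\<forall>p. \<alpha> p \<le> E) \<and> (\<forall>p>2*n. \<alpha> p = 0)}"
  have wadd: "w (\<lambda>p. \<alpha> p + \<beta> p) = w \<alpha> + w \<beta>" for \<alpha> \<beta>
    unfolding w_def by (simp add: add_mult_distrib sum.distrib)
  have wmono: "w \<alpha> \<le> w \<beta>" if "\<forall>p. \<alpha> p \<le> \<beta> p" for \<alpha> \<beta>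
    unfolding w_def using that by (intro sum_mono mult_right_mono) auto
  have winj: "\<alpha> = \<beta>" if "\<alpha> \<in> G" "\<beta> \<in> G" "w \<alpha> = w \<beta>" for \<alpha> \<beta>
  proof -
    have "\<forall>p\<le>2*n. \<alpha> p = \<beta> p"
      by (rule base_inj[of "2*n" \<alpha> B \<beta>]) (use that in \<open>auto simp: G_def B_def w_def less_Suc_eq_le\<close>)
    moreover have "\<forall>p>2*n. \<alpha> p = \<beta> p" using that by (simp add: G_def)
    ultimately show ?thesis
    proof (intro ext)
      fix p show "\<alpha> p = \<beta> p"
        using \<open>\<forall>p\<le>2*n. \<alpha> p = \<beta> p\<close> \<open>\<forall>p>2*n. \<alpha> p = \<beta> p\<close> by (cases "p \<le> 2*n") auto
    qed
  qed
  have Gdown: "\<gamma> \<in> G" if "\<alpha> \<in> G" "\<forall>p. \<gamma> p \<le> \<alpha> p" for \<alpha> \<gamma>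
  proof -
    have "\<gamma> p \<le> E" for p using that unfolding G_def by (blast intro: le_trans)
    moreover have "\<gamma> p = 0" if "p > 2*n" for p
    proof -
      have "\<alpha> p = 0" using \<open>\<alpha> \<in> G\<close> that unfolding G_def by blast
      thus ?thesis using \<open>\<forall>p. \<gamma> p \<le> \<alpha> p\<close> by (metis le_zero_eq)
    qed
    ultimately show ?thesis unfolding G_def by blast
  qed
  have SG: "\<alpha> \<in> G" if "\<alpha> \<in> S" for \<alpha> using that Ebound Ssupp unfolding G_def by auto
  obtain L where LS: "L \<in> S" and Lmax: "\<And>\<alpha>. \<alpha> \<in> S \<Longrightarrow> w \<alpha> \<le> w L"
  proof -
    have "Max (w ` S) \<in> w ` S" using finS g0S by (intro Max_in) auto
    then obtain L where "L \<in> S" "w L = Max (w ` S)" by auto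
    moreover have "w \<alpha> \<le> Max (w ` S)" if "\<alpha> \<in> S" for \<alpha> using finS that by simp
    ultimately show ?thesis using that by auto
  qed
  have wpos: "0 < w \<gamma>0"
  proof -
    obtain p where p: "\<gamma>0 p \<noteq> 0" using nc(3) by auto
    hence p2: "p \<le> 2*n" using Ssupp[OF g0S, of p] by (meson not_le)
    have "0 < \<gamma>0 p * B ^ p" using p by (simp add: B_def)
    also have "\<gamma>0 p * B ^ p \<le> w \<gamma>0" unfolding w_def
      by (rule member_le_sum[where f = "\<lambda>p. \<gamma>0 p * B ^ p"]) (use p2 in auto)
    finally show ?thesis .
  qed
  have wL: "0 < w L" using wpos Lmax[OF g0S] by simp
  have L0: "L \<noteq> (\<lambda>_. 0)"
  proof
    assume "L = (\<lambda>_. 0)" hence "w L = 0" unfolding w_def by simp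
    with wL show False by simp
  qed
  have notS: "M l j (\<lambda>p. L p + L p) = 0" if "l < K" "j < K" for l j
  proof (rule ccontr)
    assume "M l j (\<lambda>p. L p + L p) \<noteq> 0"
    hence "(\<lambda>p. L p + L p) \<in> S" unfolding S_def using that by auto
    hence "w (\<lambda>p. L p + L p) \<le> w L" by (rule Lmax)
    with wL show False unfolding wadd by simp
  qed
  obtain l1 i1 where l1: "l1 < K" "i1 < K" "M l1 i1 L \<noteq> 0" using LS unfolding S_def by auto
  have terms: "nc_mult n \<Theta> (nc_star n \<Theta> (M l i1)) (M l i1) (\<lambda>p. L p + L p) = cnj (M l i1 L) * M l i1 L"
    if l: "l < K" for l
  proof (rule key_entry[where w = w and G = G])
    show "finite {\<alpha>. M l i1 \<alpha> \<noteq> 0}" using car[OF l l1(2)] by (rule carrier_fin)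
    show "finite {\<alpha>. nc_star n \<Theta> (M l i1) \<alpha> \<noteq> 0}" using car[OF l l1(2)] by (rule carrier_fin_star)
    show "w (\<lambda>p. \<alpha> p + \<beta> p) = w \<alpha> + w \<beta>" for \<alpha> \<beta> by (rule wadd)
    show "w \<alpha> \<le> w \<beta>" if "\<forall>p. \<alpha> p \<le> \<beta> p" for \<alpha> \<beta> using that by (rule wmono)
    show "\<alpha> = \<beta>" if "\<alpha> \<in> G" "\<beta> \<in> G" "w \<alpha> = w \<beta>" for \<alpha> \<beta> using that by (rule winj)
    show "\<gamma> \<in> G" if "\<alpha> \<in> G" "\<forall>p. \<gamma> p \<le> \<alpha> p" for \<alpha> \<gamma> using that by (rule Gdown)
    show "\<alpha> \<in> G \<and> w \<alpha> \<le> w L" if "M l i1 \<alpha> \<noteq> 0" for \<alpha>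
    proof -
      have "\<alpha> \<in> S" unfolding S_def using that l l1 by auto
      thus ?thesis using SG Lmax by blast
    qed
    show "L \<in> G" using LS by (rule SG)
  qed
  have "(\<Sum>l<K. nc_mult n \<Theta> (nc_star n \<Theta> (M l i1)) (M l i1) (\<lambda>p. L p + L p)) =
        (\<Sum>l<K. cnj (M l i1 L) * M l i1 L)" using terms by (intro sum.cong) auto
  also have "\<dots> \<noteq> 0" by (rule sum_cnj_nz[where z = "\<lambda>l. M l i1 L"]) (use l1 in auto)
  finally show ?thesis using l1(2) L0 notS by blast
qed


lemma mat_const:
  assumes M: "is_mat n K M"
    and H: "\<And>i \<gamma>. i < K \<Longrightarrow> \<gamma> \<noteq> (\<lambda>_. 0) \<Longrightarrow> (\<forall>l<K. \<forall>j<K. M l j \<gamma> = 0) \<Longrightarrow>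
              (\<Sum>l<K. nc_mult n \<Theta> (nc_star n \<Theta> (M l i)) (M l i) \<gamma>) = 0"
  shows "M l j = cst (M l j (\<lambda>_. 0))"
proof (cases "l < K \<and> j < K")
  case False
  hence "M l j = nc_zero" using M unfolding is_mat_def by blast
  thus ?thesis by (simp add: nc_zero_def cst_def fun_eq_iff)
next
  case True
  show ?thesis
  proof (rule ccontr)
    assume "M l j \<noteq> cst (M l j (\<lambda>_. 0))"
    then obtain \<gamma>0 where "M l j \<gamma>0 \<noteq> cst (M l j (\<lambda>_. 0)) \<gamma>0" by auto
    hence g0: "\<gamma>0 \<noteq> (\<lambda>_. 0)" "M l j \<gamma>0 \<noteq> 0" by (auto simp: cst_def split: if_splits)
    have "\<exists>i<K. \<exists>L. L \<noteq> (\<lambda>_. 0) \<and> (\<forall>l<K. \<forall>j<K. M l j (\<lambda>p. L p + L p) = 0) \<and>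
     (\<Sum>l<K. nc_mult n \<Theta> (nc_star n \<Theta> (M l i)) (M l i) (\<lambda>p. L p + L p)) \<noteq> 0"
      by (rule nonconst_witness[of n K M l j \<gamma>0 \<Theta>, OF M conjunct1[OF True] conjunct2[OF True] g0(1) g0(2)])
    then obtain i L where i: "i < K" and L: "L \<noteq> (\<lambda>_. 0)" "\<forall>l<K. \<forall>j<K. M l j (\<lambda>p. L p + L p) = 0"
      "(\<Sum>l<K. nc_mult n \<Theta> (nc_star n \<Theta> (M l i)) (M l i) (\<lambda>p. L p + L p)) \<noteq> 0"
      by blast
    have "(\<lambda>p. L p + L p) \<noteq> (\<lambda>_. 0)"
    proof
      assume "(\<lambda>p. L p + L p) = (\<lambda>_. 0)"
      hence "L p = 0" for p by (metis add_is_0)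
      with L(1) show False by auto
    qed
    from H[OF i this L(2)] L(3) show False by simp
  qed
qed

definition cm :: "(nat \<Rightarrow> nat \<Rightarrow> complex) \<Rightarrow> nc_mat" where
  "cm A = (\<lambda>i j. cst (A i j))"

definition pc :: "nc_mat \<Rightarrow> (nat \<Rightarrow> nat \<Rightarrow> complex)" where
  "pc P = (\<lambda>i j. P i j (\<lambda>_. 0))"

definition cmul :: "nat \<Rightarrow> (nat \<Rightarrow> nat \<Rightarrow> complex) \<Rightarrow> (nat \<Rightarrow> nat \<Rightarrow> complex) \<Rightarrow> (nat \<Rightarrow> nat \<Rightarrow> complex)" where
  "cmul K A B = (\<lambda>i j. \<Sum>l<K. A i l * B l j)"

definition cstar :: "(nat \<Rightarrow> nat \<Rightarrow> complex) \<Rightarrow> (nat \<Rightarrow> nat \<Rightarrow> complex)" where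
  "cstar A = (\<lambda>i j. cnj (A j i))"

definition cid :: "nat \<Rightarrow> (nat \<Rightarrow> nat \<Rightarrow> complex)" where
  "cid K = (\<lambda>i j. if i = j \<and> i < K then 1 else 0)"

definition czero :: "nat \<Rightarrow> (nat \<Rightarrow> nat \<Rightarrow> complex) \<Rightarrow> bool" where
  "czero K A \<longleftrightarrow> (\<forall>i j. \<not> (i < K \<and> j < K) \<longrightarrow> A i j = 0)"

definition cproj :: "nat \<Rightarrow> (nat \<Rightarrow> nat \<Rightarrow> complex) \<Rightarrow> bool" where
  "cproj K P \<longleftrightarrow> czero K P \<and> cmul K P P = P \<and> cstar P = P"

definition cunit :: "nat \<Rightarrow> (nat \<Rightarrow> nat \<Rightarrow> complex) \<Rightarrow> bool" where
  "cunit K U \<longleftrightarrow> czero K U \<and> cmul K U (cstar U) = cid K \<and> cmul K (cstar U) U = cid K"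

lemma cst_sum: "(\<Sum>l\<in>A. cst (f l) \<gamma>) = cst (\<Sum>l\<in>A. f l) \<gamma>"
  by (cases "\<gamma> = (\<lambda>_. 0)") (simp_all add: cst_def)

lemma mat_mult_cm: "mat_mult n \<Theta> K (cm A) (cm B) = cm (cmul K A B)"
  unfolding mat_mult_def cm_def cmul_def nc_mult_cst by (simp add: cst_sum)

lemma mat_star_cm: "mat_star n \<Theta> (cm A) = cm (cstar A)"
  unfolding mat_star_def cm_def cstar_def by (simp add: nc_star_cst)

lemma mat_id_cm: "mat_id K = cm (cid K)"
  unfolding mat_id_def cm_def cid_def by (auto simp: nc_one_cst nc_zero_cst fun_eq_iff)

lemma is_mat_cm: "is_mat n K (cm A) \<longleftrightarrow> czero K A"
  unfolding is_mat_def czero_def cm_def by (auto simp: cst_carrier nc_zero_cst cst_inj)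

lemma cm_inj: "cm A = cm B \<longleftrightarrow> A = B"
proof
  assume "cm A = cm B"
  hence "cst (A i j) = cst (B i j)" for i j unfolding cm_def by metis
  hence "A i j = B i j" for i j using cst_inj by blast
  thus "A = B" by (intro ext)
qed simp

lemma pc_cm: "pc (cm A) = A"
  unfolding pc_def cm_def cst_def by simp

lemma unitary_const:
  assumes "is_unitary n \<Theta> K U"
  shows "U = cm (pc U)" "cunit K (pc U)"
proof -
  have M: "is_mat n K U" and U2: "mat_mult n \<Theta> K (mat_star n \<Theta> U) U = mat_id K"
    and U1: "mat_mult n \<Theta> K U (mat_star n \<Theta> U) = mat_id K"
    using assms unfolding is_unitary_def by auto
  have "U l j = cst (U l j (\<lambda>_. 0))" for l j
  proof (rule mat_const[OF M])
    fix i and \<gamma> :: "nat \<Rightarrow> nat" assume i: "i < K" and g: "\<gamma> \<noteq> (\<lambda>_. 0)"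
    have "(\<Sum>l<K. nc_mult n \<Theta> (nc_star n \<Theta> (U l i)) (U l i) \<gamma>) = mat_mult n \<Theta> K (mat_star n \<Theta> U) U i i \<gamma>"
      unfolding mat_mult_def mat_star_def by simp
    also have "\<dots> = mat_id K i i \<gamma>" using U2 by simp
    also have "\<dots> = 0" using g by (simp add: mat_id_def nc_one_def nc_zero_def)
    finally show "(\<Sum>l<K. nc_mult n \<Theta> (nc_star n \<Theta> (U l i)) (U l i) \<gamma>) = 0" .
  qed
  hence h2: "U i j = cm (pc U) i j" for i j unfolding cm_def pc_def .
  have Ueq: "U = cm (pc U)" by (intro ext) (simp only: h2)
  thus "U = cm (pc U)" .
  define A where "A = pc U"
  have UA: "U = cm A" using Ueq unfolding A_def .
  have "czero K A" using M unfolding UA is_mat_cm .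
  moreover have "cm (cmul K A (cstar A)) = cm (cid K)"
    using U1 unfolding UA mat_mult_cm mat_star_cm mat_id_cm .
  moreover have "cm (cmul K (cstar A) A) = cm (cid K)"
    using U2 unfolding UA mat_mult_cm mat_star_cm mat_id_cm .
  ultimately show "cunit K (pc U)" unfolding cunit_def cm_inj A_def by simp
qed

lemma unitary_cm: "cunit K W \<Longrightarrow> is_unitary n \<Theta> K (cm W)"
  unfolding cunit_def is_unitary_def by (simp add: is_mat_cm mat_mult_cm mat_star_cm mat_id_cm)

lemma projector_const:
  assumes "(N, P) \<in> projectors n \<Theta>"
  shows "P = cm (pc P)" "cproj N (pc P)"
proof -
  have M: "is_mat n N P" and P2: "mat_mult n \<Theta> N P P = P" and Ps: "mat_star n \<Theta> P = P"
    using assms unfolding projectors_def by auto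
  have "P l j = cst (P l j (\<lambda>_. 0))" for l j
  proof (rule mat_const[OF M])
    fix i and \<gamma> :: "nat \<Rightarrow> nat" assume i: "i < N" and g: "\<gamma> \<noteq> (\<lambda>_. 0)" and z: "\<forall>l<N. \<forall>j<N. P l j \<gamma> = 0"
    have st: "nc_star n \<Theta> (P l i) = P i l" for l using Ps unfolding mat_star_def by metis
    have "(\<Sum>l<N. nc_mult n \<Theta> (nc_star n \<Theta> (P l i)) (P l i) \<gamma>) = mat_mult n \<Theta> N P P i i \<gamma>"
      unfolding mat_mult_def st by simp
    also have "\<dots> = 0" using P2 z i by simp
    finally show "(\<Sum>l<N. nc_mult n \<Theta> (nc_star n \<Theta> (P l i)) (P l i) \<gamma>) = 0" .
  qed
  hence h2: "P i j = cm (pc P) i j" for i j unfolding cm_def pc_def .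
  have Peq: "P = cm (pc P)" by (intro ext) (simp only: h2)
  thus "P = cm (pc P)" .
  define A where "A = pc P"
  have PA: "P = cm A" using Peq unfolding A_def .
  have "czero N A" using M unfolding PA is_mat_cm .
  moreover have "cm (cmul N A A) = cm A"
    using P2 unfolding PA mat_mult_cm .
  moreover have "cm (cstar A) = cm A"
    using Ps unfolding PA mat_star_cm .
  ultimately show "cproj N (pc P)" unfolding cproj_def cm_inj A_def by simp
qed

lemma projector_cm: "cproj N A \<Longrightarrow> (N, cm A) \<in> projectors n \<Theta>"
  unfolding cproj_def projectors_def by (simp add: is_mat_cm mat_mult_cm mat_star_cm)


type_synonym cmat = "nat \<Rightarrow> nat \<Rightarrow> complex"

lemma cmul_assoc: "cmul K (cmul K A B) C = cmul K A (cmul K B C)"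
proof (intro ext)
  fix i j
  have "cmul K (cmul K A B) C i j = (\<Sum>l<K. \<Sum>m<K. A i m * B m l * C l j)"
    unfolding cmul_def by (simp add: sum_distrib_right)
  also have "\<dots> = (\<Sum>m<K. \<Sum>l<K. A i m * B m l * C l j)" by (rule sum.swap)
  also have "\<dots> = cmul K A (cmul K B C) i j"
    unfolding cmul_def by (simp add: sum_distrib_left mult.assoc)
  finally show "cmul K (cmul K A B) C i j = cmul K A (cmul K B C) i j" .
qed

lemma cstar_cmul: "cstar (cmul K A B) = cmul K (cstar B) (cstar A)"
  unfolding cstar_def cmul_def by (simp add: mult.commute)

lemma cstar_cstar[simp]: "cstar (cstar A) = A"
  unfolding cstar_def by simp

lemma sum_cid_left: "(\<Sum>l<K. cid K i l * f l) = (if i < K then f i else 0)"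
  unfolding cid_def by (simp add: if_distrib[of "\<lambda>x. x * _"] sum.delta cong: if_cong)

lemma sum_cid_right: "(\<Sum>l<K. f l * cid K l j) = (if j < K then f j else 0)"
  by (rule trans[OF sum_single[where a = j]]) (auto simp: cid_def)

lemma czeroD: "czero K A \<Longrightarrow> \<not> (i < K \<and> j < K) \<Longrightarrow> A i j = 0"
  unfolding czero_def by blast

lemma cmul_cid_left: "czero K A \<Longrightarrow> cmul K (cid K) A = A"
  unfolding cmul_def sum_cid_left by (auto simp: fun_eq_iff dest: czeroD)

lemma cmul_cid_right: "czero K A \<Longrightarrow> cmul K A (cid K) = A"
  unfolding cmul_def sum_cid_right by (auto simp: fun_eq_iff dest: czeroD)

lemma czero_cmul: "czero K A \<Longrightarrow> czero K B \<Longrightarrow> czero K (cmul K A B)"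
  unfolding czero_def cmul_def by auto

lemma czero_cstar: "czero K A \<Longrightarrow> czero K (cstar A)"
  unfolding czero_def cstar_def by auto

lemma czero_mono: "czero N A \<Longrightarrow> N \<le> K \<Longrightarrow> czero K A"
  unfolding czero_def by auto

lemma czero_cid: "r \<le> K \<Longrightarrow> czero K (cid r)"
  unfolding czero_def cid_def by auto

lemma cmul_shrink_left:
  assumes "\<And>i l. N \<le> l \<Longrightarrow> A i l = 0" "N \<le> K"
  shows "cmul K A B = cmul N A B"
proof (intro ext)
  fix i j
  have "(\<Sum>l<K. A i l * B l j) = (\<Sum>l<N. A i l * B l j)"
    by (rule sum.mono_neutral_right) (use assms in auto)
  thus "cmul K A B i j = cmul N A B i j" unfolding cmul_def .
qed

lemma cmul_shrink_right:
  assumes "\<And>l j. N \<le> l \<Longrightarrow> B l j = 0" "N \<le> K"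
  shows "cmul K A B = cmul N A B"
proof (intro ext)
  fix i j
  have "(\<Sum>l<K. A i l * B l j) = (\<Sum>l<N. A i l * B l j)"
    by (rule sum.mono_neutral_right) (use assms in auto)
  thus "cmul K A B i j = cmul N A B i j" unfolding cmul_def .
qed

definition ctr :: "nat \<Rightarrow> cmat \<Rightarrow> complex" where
  "ctr K A = (\<Sum>i<K. A i i)"

lemma ctr_cmul_comm: "ctr K (cmul K A B) = ctr K (cmul K B A)"
proof -
  have "ctr K (cmul K A B) = (\<Sum>i<K. \<Sum>l<K. A i l * B l i)" unfolding ctr_def cmul_def by simp
  also have "\<dots> = (\<Sum>l<K. \<Sum>i<K. B l i * A i l)" by (subst sum.swap) (simp add: mult.commute)
  also have "\<dots> = ctr K (cmul K B A)" unfolding ctr_def cmul_def by simp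
  finally show ?thesis .
qed

lemma ctr_cid: "r \<le> K \<Longrightarrow> ctr K (cid r) = of_nat r"
proof -
  assume r: "r \<le> K"
  have "ctr K (cid r) = (\<Sum>i<K. if i < r then 1 else 0)" unfolding ctr_def cid_def by simp
  also have "\<dots> = (\<Sum>i<r. if i < r then 1 else 0)" by (rule sum.mono_neutral_right) (use r in auto)
  also have "\<dots> = (\<Sum>i<r. 1)" by simp
  finally show ?thesis by simp
qed

lemma ctr_mono: "czero N A \<Longrightarrow> N \<le> K \<Longrightarrow> ctr K A = ctr N A"
  unfolding ctr_def by (rule sum.mono_neutral_right) (auto simp: czero_def)

lemma cid_cid: "r \<le> K \<Longrightarrow> cmul K (cid r) (cid r) = cid r"
  by (metis cmul_cid_left cmul_shrink_left cid_def czero_cid order_refl not_less) 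

lemma cstar_cid: "cstar (cid r) = cid r"
  unfolding cstar_def cid_def by (auto simp: fun_eq_iff)

lemma cproj_cid: "r \<le> K \<Longrightarrow> cproj K (cid r)"
  unfolding cproj_def using czero_cid cid_cid cstar_cid by blast

lemma cproj_mono: "cproj N P \<Longrightarrow> N \<le> K \<Longrightarrow> cproj K P"
  unfolding cproj_def
  by (metis cmul_shrink_left czeroD czero_mono not_less)

lemma cunit_cid: "cunit K (cid K)"
  unfolding cunit_def using cstar_cid cid_cid czero_cid by simp

lemma cunit_star: "cunit K U \<Longrightarrow> cunit K (cstar U)"
  unfolding cunit_def using czero_cstar by simp

lemma cunit_mult:
  assumes U: "cunit K U" and V: "cunit K V"
  shows "cunit K (cmul K U V)"
proof -
  have zU: "czero K U" and zV: "czero K V" and u1: "cmul K U (cstar U) = cid K" and u2: "cmul K (cstar U) U = cid K"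
    and v1: "cmul K V (cstar V) = cid K" and v2: "cmul K (cstar V) V = cid K"
    using U V unfolding cunit_def by auto
  have "cmul K (cmul K U V) (cstar (cmul K U V)) = cmul K U (cmul K (cmul K V (cstar V)) (cstar U))"
    by (simp add: cstar_cmul cmul_assoc)
  also have "\<dots> = cid K" using v1 u1 czero_cstar[OF zU] by (simp add: cmul_cid_left)
  finally have 1: "cmul K (cmul K U V) (cstar (cmul K U V)) = cid K" .
  have "cmul K (cstar (cmul K U V)) (cmul K U V) = cmul K (cstar V) (cmul K (cmul K (cstar U) U) V)"
    by (simp add: cstar_cmul cmul_assoc)
  also have "\<dots> = cid K" using v2 u2 zV by (simp add: cmul_cid_left)
  finally have 2: "cmul K (cstar (cmul K U V)) (cmul K U V) = cid K" .
  show ?thesis unfolding cunit_def using 1 2 czero_cmul[OF zU zV] by simp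
qed

lemma cunit_cancel:
  assumes U: "cunit K U" and X: "czero K X"
  shows "cmul K (cstar U) (cmul K U X) = X" "cmul K U (cmul K (cstar U) X) = X"
    "cmul K (cmul K X U) (cstar U) = X" "cmul K (cmul K X (cstar U)) U = X"
  using U X unfolding cunit_def
  by (simp_all add: cmul_assoc[symmetric] cmul_cid_left) (simp_all add: cmul_assoc cmul_cid_right)


definition cap :: "nat \<Rightarrow> cmat \<Rightarrow> (nat \<Rightarrow> complex) \<Rightarrow> (nat \<Rightarrow> complex)" where
  "cap N A x = (\<lambda>i. \<Sum>l<N. A i l * x l)"

definition vzero :: "nat \<Rightarrow> (nat \<Rightarrow> complex) \<Rightarrow> bool" where
  "vzero N x \<longleftrightarrow> (\<forall>i. N \<le> i \<longrightarrow> x i = 0)"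

definition cinner :: "nat \<Rightarrow> (nat \<Rightarrow> complex) \<Rightarrow> (nat \<Rightarrow> complex) \<Rightarrow> complex" where
  "cinner N x y = (\<Sum>i<N. cnj (x i) * y i)"

lemma cap_cmul: "cap N (cmul N A B) x = cap N A (cap N B x)"
proof (rule ext)
  fix i
  have "cap N (cmul N A B) x i = (\<Sum>l<N. \<Sum>m<N. A i m * B m l * x l)"
    unfolding cap_def cmul_def by (simp add: sum_distrib_right)
  also have "\<dots> = (\<Sum>m<N. \<Sum>l<N. A i m * B m l * x l)" by (rule sum.swap)
  also have "\<dots> = cap N A (cap N B x) i"
    unfolding cap_def by (simp add: sum_distrib_left mult.assoc)
  finally show "cap N (cmul N A B) x i = cap N A (cap N B x) i" .
qed

lemma kernel_vec:
  assumes P: "cproj N P" and ne: "P \<noteq> cid N"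
  shows "\<exists>x a. vzero N x \<and> a < N \<and> x a \<noteq> 0 \<and> cap N P x = (\<lambda>_. 0)"
proof -
  have zP: "czero N P" and PP: "cmul N P P = P" using P unfolding cproj_def by auto
  obtain a j where aj: "P a j \<noteq> cid N a j" using ne by (meson ext)
  have a: "a < N" and j: "j < N" using aj zP czero_cid[of N N] by (metis czeroD order_refl)+
  define x where "x = (\<lambda>l. cid N l j - P l j)"
  have "vzero N x" unfolding vzero_def x_def cid_def using zP by (auto simp: czero_def)
  moreover have "x a \<noteq> 0" unfolding x_def using aj by simp
  moreover have "cap N P x = (\<lambda>_. 0)"
  proof (rule ext)
    fix m
    have "cap N P x m = (\<Sum>l<N. P m l * cid N l j) - (\<Sum>l<N. P m l * P l j)"
      unfolding cap_def x_def by (simp add: right_diff_distrib sum_subtractf)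
    also have "(\<Sum>l<N. P m l * cid N l j) = P m j" unfolding sum_cid_right using j by simp
    also have "(\<Sum>l<N. P m l * P l j) = cmul N P P m j" unfolding cmul_def by simp
    also have "\<dots> = P m j" using PP by simp
    finally show "cap N P x m = 0" by simp
  qed
  ultimately show ?thesis using a by blast
qed

lemma cnj_mult_self: "cnj z * z = complex_of_real ((cmod z)\<^sup>2)"
  by (subst complex_norm_square) (rule mult.commute)

lemma normalize_vec:
  assumes x: "vzero N x" "a < N" "x a \<noteq> 0" "cap N P x = (\<lambda>_. 0)" and N: "N = Suc N'"
  shows "\<exists>v. vzero N v \<and> cap N P v = (\<lambda>_. 0) \<and> cinner N v v = 1 \<and> cnj (v N') = v N'"
proof -
  define sr where "sr = (\<Sum>i<N. (cmod (x i))\<^sup>2)"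
  have sr_pos: "0 < sr" unfolding sr_def
    by (rule sum_pos2[of _ a]) (use x in auto)
  have s_eq: "cinner N x x = complex_of_real sr" unfolding cinner_def sr_def cnj_mult_self by simp
  define t where "t = sqrt sr"
  have t_pos: "0 < t" unfolding t_def using sr_pos by simp
  have tt: "t * t = sr" unfolding t_def using sr_pos by simp
  define c where "c = x N'"
  define ph where "ph = (if c = 0 then 1 else cnj c / complex_of_real (cmod c))"
  have ph1: "cnj ph * ph = 1"
  proof (cases "c = 0")
    case False
    hence "cmod c \<noteq> 0" by simp
    have "cnj ph * ph = (c * cnj c) / complex_of_real ((cmod c)\<^sup>2)"
      unfolding ph_def using False by (simp add: power2_eq_square)
    also have "\<dots> = 1" unfolding complex_norm_square[symmetric] using False by simp
    finally show ?thesis .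
  qed (simp add: ph_def)
  have phc: "ph * c = complex_of_real (cmod c)"
  proof (cases "c = 0")
    case False
    have "ph * c = (c * cnj c) / complex_of_real (cmod c)" unfolding ph_def using False by (simp add: mult.commute)
    also have "\<dots> = complex_of_real ((cmod c)\<^sup>2 / cmod c)"
      unfolding complex_norm_square[symmetric] by simp
    also have "(cmod c)\<^sup>2 / cmod c = cmod c" using False by (simp add: power2_eq_square)
    finally show ?thesis .
  qed (simp add: ph_def)
  define v where "v = (\<lambda>i. ph * x i / complex_of_real t)"
  have "vzero N v" using x(1) unfolding vzero_def v_def by simp
  moreover have "cap N P v = (\<lambda>_. 0)"
  proof (rule ext)
    fix i
    have "cap N P v i = ph / complex_of_real t * cap N P x i"
      unfolding cap_def v_def by (simp add: sum_distrib_left algebra_simps)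
    thus "cap N P v i = 0" using x(4) by (metis mult_zero_right)
  qed
  moreover have "cinner N v v = 1"
  proof -
    have "cinner N v v = (cnj ph * ph) / complex_of_real (t * t) * cinner N x x"
      unfolding cinner_def v_def by (simp add: sum_distrib_left sum_divide_distrib algebra_simps)
    also have "\<dots> = 1" unfolding ph1 tt s_eq using sr_pos by simp
    finally show ?thesis .
  qed
  moreover have "cnj (v N') = v N'"
  proof -
    have "v N' = complex_of_real (cmod c / t)" unfolding v_def c_def[symmetric]
      by (simp add: phc)
    thus ?thesis by simp
  qed
  ultimately show ?thesis by blast
qed

definition hh :: "nat \<Rightarrow> complex \<Rightarrow> (nat \<Rightarrow> complex) \<Rightarrow> cmat" where
  "hh N c w = (\<lambda>i j. cid N i j - c * (w i * cnj (w j)))"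

lemma hh_sq:
  assumes w: "vzero N w" and c: "c * c * cinner N w w = 2 * c"
  shows "cmul N (hh N c w) (hh N c w) = cid N"
proof (intro ext)
  fix i j
  have e: "(a - b) * (d - f) = a * d - a * f - b * d + b * f" for a b d f :: complex
    by (simp add: algebra_simps)
  have "cmul N (hh N c w) (hh N c w) i j =
     (\<Sum>l<N. cid N i l * cid N l j) - (\<Sum>l<N. cid N i l * (c * (w l * cnj (w j))))
     - (\<Sum>l<N. c * (w i * cnj (w l)) * cid N l j) + (\<Sum>l<N. (c * c * w i * cnj (w j)) * (cnj (w l) * w l))"
    unfolding cmul_def hh_def e by (simp add: sum.distrib sum_subtractf algebra_simps)
  also have "(\<Sum>l<N. cid N i l * cid N l j) = cid N i j" unfolding sum_cid_left by (simp add: cid_def)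
  also have "(\<Sum>l<N. cid N i l * (c * (w l * cnj (w j)))) = c * (w i * cnj (w j))"
    unfolding sum_cid_left using w by (simp add: vzero_def)
  also have "(\<Sum>l<N. c * (w i * cnj (w l)) * cid N l j) = c * (w i * cnj (w j))"
    unfolding sum_cid_right using w by (simp add: vzero_def)
  also have "(\<Sum>l<N. (c * c * w i * cnj (w j)) * (cnj (w l) * w l)) = (c * c * cinner N w w) * (w i * cnj (w j))"
    unfolding cinner_def sum_distrib_left[symmetric] by (simp add: algebra_simps)
  also have "cid N i j - c * (w i * cnj (w j)) - c * (w i * cnj (w j)) + (c * c * cinner N w w) * (w i * cnj (w j))
      = cid N i j" unfolding c by (simp add: algebra_simps)
  finally show "cmul N (hh N c w) (hh N c w) i j = cid N i j" .
qed

lemma householder: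
  assumes v: "vzero N v" "cinner N v v = 1" "cnj (v N') = v N'" and N: "N = Suc N'"
  shows "\<exists>H. cunit N H \<and> cstar H = H \<and> (\<forall>i. H i N' = v i)"
proof -
  define e where "e = (\<lambda>i. if i = N' then (1::complex) else 0)"
  show ?thesis
  proof (cases "v = e")
    case True
    have "cid N i N' = v i" for i unfolding True e_def cid_def N by simp
    thus ?thesis using cunit_cid cstar_cid by blast
  next
    case False
    define w where "w = (\<lambda>i. v i - e i)"
    have wz: "vzero N w" using v(1) unfolding vzero_def w_def e_def N by simp
    obtain a where a: "v a \<noteq> e a" using False by auto
    have aN: "a < N"
    proof (rule ccontr)
      assume "\<not> a < N"
      hence "v a = 0" "e a = 0" using v(1) unfolding vzero_def e_def N by auto
      with a show False by simp
    qed
    define s where "s = cinner N w w"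
    have s0: "s \<noteq> 0" unfolding s_def cinner_def
      by (rule sum_cnj_nz[where z = w]) (use a aN in \<open>auto simp: w_def\<close>)
    have sum_e_r: "(\<Sum>i<N. f i * e i) = f N'" for f :: "nat \<Rightarrow> complex"
      by (rule trans[OF sum_single[where a = N']]) (auto simp: e_def N)
    have sum_e_l: "(\<Sum>i<N. e i * f i) = f N'" for f :: "nat \<Rightarrow> complex"
      by (rule trans[OF sum_single[where a = N']]) (auto simp: e_def N)
    have cnje: "cnj (e i) = e i" for i unfolding e_def by simp
    have "s = (\<Sum>i<N. cnj (v i) * v i) - (\<Sum>i<N. cnj (v i) * e i) - (\<Sum>i<N. e i * v i) + (\<Sum>i<N. e i * e i)"
      unfolding s_def cinner_def w_def by (simp add: cnje sum.distrib sum_subtractf algebra_simps)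
    also have "\<dots> = 1 - cnj (v N') - v N' + 1" unfolding sum_e_r sum_e_l using v(2)
      unfolding cinner_def by (simp add: e_def)
    finally have s_eq: "s = 2 - 2 * v N'" using v(3) by simp
    have cnjs: "cnj s = s" unfolding s_eq using v(3) by simp
    define c where "c = 2 / s"
    have cc: "c * c * cinner N w w = 2 * c" unfolding c_def s_def[symmetric] using s0
      by (simp add: field_simps power2_eq_square)
    define H where "H = hh N c w"
    have zH: "czero N H" unfolding czero_def H_def hh_def cid_def using wz unfolding vzero_def by auto
    have sH: "cstar H = H" unfolding cstar_def H_def hh_def c_def using cnjs
      by (auto simp: fun_eq_iff cid_def)
    have HH: "cmul N H H = cid N" unfolding H_def by (rule hh_sq[OF wz cc])
    have uH: "cunit N H" unfolding cunit_def using zH sH HH by simp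
    have colH: "H i N' = v i" for i
    proof -
      have wN: "cnj (w N') = v N' - 1" unfolding w_def e_def using v(3) by simp
      have vN1: "v N' - 1 \<noteq> 0" using s0 s_eq by auto
      define d where "d = v N' - 1"
      have d0: "d \<noteq> 0" using vN1 unfolding d_def .
      have "2 - 2 * v N' = -2 * d" unfolding d_def by simp
      hence "c = 2 / (-2 * d)" unfolding c_def s_eq by simp
      hence cd: "c * d = -1" using d0 by simp
      have "c * (w i * cnj (w N')) = (c * d) * w i" unfolding wN d_def[symmetric] by (simp only: mult_ac)
      hence "H i N' = cid N i N' + w i" unfolding H_def hh_def cd by simp
      also have "cid N i N' = e i" unfolding cid_def e_def N by simp
      finally show ?thesis unfolding w_def by simp
    qed
    show ?thesis using uH sH colH by blast
  qed
qed


definition ext1 :: "nat \<Rightarrow> cmat \<Rightarrow> cmat" where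
  "ext1 N' U = (\<lambda>i j. if i = N' \<and> j = N' then 1 else U i j)"

lemma ext1_unit:
  assumes U: "cunit N' U"
  shows "cunit (Suc N') (ext1 N' U)"
proof -
  have zU: "czero N' U" and u1: "cmul N' U (cstar U) = cid N'" and u2: "cmul N' (cstar U) U = cid N'"
    using U unfolding cunit_def by auto
  have UN: "U i N' = 0" "U N' i = 0" for i using zU by (auto simp: czero_def)
  have z: "czero (Suc N') (ext1 N' U)" using zU unfolding czero_def ext1_def by auto
  have m1: "cmul (Suc N') (ext1 N' U) (cstar (ext1 N' U)) = cid (Suc N')"
  proof (intro ext)
    fix i j
    have "cmul (Suc N') (ext1 N' U) (cstar (ext1 N' U)) i j =
       (\<Sum>l<N'. U i l * cnj (U j l)) + ext1 N' U i N' * cnj (ext1 N' U j N')"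
      unfolding cmul_def cstar_def ext1_def by simp
    also have "(\<Sum>l<N'. U i l * cnj (U j l)) = cmul N' U (cstar U) i j" unfolding cmul_def cstar_def by simp
    also have "\<dots> = cid N' i j" using u1 by simp
    also have "ext1 N' U i N' * cnj (ext1 N' U j N') = (if i = N' \<and> j = N' then 1 else 0)"
      unfolding ext1_def using UN by simp
    finally show "cmul (Suc N') (ext1 N' U) (cstar (ext1 N' U)) i j = cid (Suc N') i j"
      unfolding cid_def by auto
  qed
  have m2: "cmul (Suc N') (cstar (ext1 N' U)) (ext1 N' U) = cid (Suc N')"
  proof (intro ext)
    fix i j
    have "cmul (Suc N') (cstar (ext1 N' U)) (ext1 N' U) i j =
       (\<Sum>l<N'. cnj (U l i) * U l j) + cnj (ext1 N' U N' i) * ext1 N' U N' j"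
      unfolding cmul_def cstar_def ext1_def by simp
    also have "(\<Sum>l<N'. cnj (U l i) * U l j) = cmul N' (cstar U) U i j" unfolding cmul_def cstar_def by simp
    also have "\<dots> = cid N' i j" using u2 by simp
    also have "cnj (ext1 N' U N' i) * ext1 N' U N' j = (if i = N' \<and> j = N' then 1 else 0)"
      unfolding ext1_def using UN by simp
    finally show "cmul (Suc N') (cstar (ext1 N' U)) (ext1 N' U) i j = cid (Suc N') i j"
      unfolding cid_def by auto
  qed
  show ?thesis unfolding cunit_def using z m1 m2 by simp
qed

lemma ext1_conj:
  assumes zQ: "czero N' Q"
  shows "cmul (Suc N') (cmul (Suc N') (ext1 N' U) Q) (cstar (ext1 N' U)) = cmul N' (cmul N' U Q) (cstar U)"
proof -
  have Qz: "Q l j = 0" if "N' \<le> l" for l j using zQ that by (auto simp: czero_def)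
  have "cmul (Suc N') (ext1 N' U) Q = cmul N' (ext1 N' U) Q"
    by (rule cmul_shrink_right) (use Qz in auto)
  also have "\<dots> = cmul N' U Q" unfolding cmul_def ext1_def by (intro ext sum.cong) auto
  finally have 1: "cmul (Suc N') (ext1 N' U) Q = cmul N' U Q" .
  have Qz2: "Q m l = 0" if "N' \<le> l" for m l using zQ that by (auto simp: czero_def)
  have Xz: "cmul N' U Q i l = 0" if "N' \<le> l" for i l unfolding cmul_def using Qz2 that by simp
  have "cmul (Suc N') (cmul N' U Q) (cstar (ext1 N' U)) = cmul N' (cmul N' U Q) (cstar (ext1 N' U))"
    by (rule cmul_shrink_left) (use Xz in auto)
  also have "\<dots> = cmul N' (cmul N' U Q) (cstar U)" unfolding cmul_def cstar_def ext1_def by (intro ext sum.cong) auto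
  finally show ?thesis unfolding 1 .
qed

lemma diag_proj:
  assumes "cproj N P"
  shows "\<exists>U r. cunit N U \<and> r \<le> N \<and> cmul N (cmul N U P) (cstar U) = cid r"
  using assms
proof (induction N arbitrary: P)
  case 0
  have "P = cid 0" using 0 unfolding cproj_def czero_def cid_def by (auto simp: fun_eq_iff)
  moreover have "cmul 0 A B = cid 0" for A B unfolding cmul_def cid_def by (simp add: fun_eq_iff)
  ultimately show ?case using cunit_cid by blast
next
  case (Suc N')
  let ?N = "Suc N'"
  have zP: "czero ?N P" and PP: "cmul ?N P P = P" and sP: "cstar P = P" using Suc.prems unfolding cproj_def by auto
  show ?case
  proof (cases "P = cid ?N")
    case True
    have "cmul ?N (cmul ?N (cid ?N) P) (cstar (cid ?N)) = cid ?N"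
      unfolding cstar_cid using zP True by (simp add: cmul_cid_left cmul_cid_right)
    thus ?thesis using cunit_cid by blast
  next
    case False
    obtain x a where "vzero ?N x" "a < ?N" "x a \<noteq> 0" "cap ?N P x = (\<lambda>_. 0)"
      using kernel_vec[OF Suc.prems False] by blast
    then obtain v where v: "vzero ?N v" "cap ?N P v = (\<lambda>_. 0)" "cinner ?N v v = 1" "cnj (v N') = v N'"
      using normalize_vec[of ?N x a P N'] by blast
    obtain H where H: "cunit ?N H" "cstar H = H" "\<And>i. H i N' = v i"
      using householder[OF v(1) v(3) v(4)] by blast
    have zH: "czero ?N H" and HH: "cmul ?N H H = cid ?N" using H(1,2) unfolding cunit_def by auto
    define Q where "Q = cmul ?N (cmul ?N H P) H"
    have zQN: "czero ?N Q" unfolding Q_def using zH zP by (simp add: czero_cmul)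
    have sQ: "cstar Q = Q" unfolding Q_def by (simp add: cstar_cmul H(2) sP cmul_assoc)
    have QQ: "cmul ?N Q Q = Q"
    proof -
      have "cmul ?N Q Q = cmul ?N H (cmul ?N P (cmul ?N (cmul ?N H H) (cmul ?N P H)))"
        unfolding Q_def by (simp add: cmul_assoc)
      also have "\<dots> = cmul ?N H (cmul ?N (cmul ?N P P) H)"
        unfolding HH using zP zH by (simp add: cmul_cid_left czero_cmul cmul_assoc)
      also have "\<dots> = Q" unfolding PP Q_def by (simp add: cmul_assoc)
      finally show ?thesis .
    qed
    have colQ: "Q i N' = 0" for i
    proof -
      have "Q i N' = cap ?N (cmul ?N H P) v i" unfolding Q_def cmul_def cap_def H(3) by simp
      also have "\<dots> = cap ?N H (cap ?N P v) i" by (simp add: cap_cmul)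
      also have "\<dots> = cap ?N H (\<lambda>_. 0) i" by (simp only: v(2))
      also have "\<dots> = 0" unfolding cap_def by simp
      finally show ?thesis .
    qed
    have rowQ: "Q N' j = 0" for j
    proof -
      have "Q N' j = cstar Q N' j" using sQ by simp
      also have "\<dots> = 0" unfolding cstar_def colQ by simp
      finally show ?thesis .
    qed
    have zQ: "czero N' Q"
      unfolding czero_def
    proof (intro allI impI)
      fix i j assume ij: "\<not> (i < N' \<and> j < N')"
      show "Q i j = 0"
      proof (cases "i < ?N \<and> j < ?N")
        case True
        hence "i = N' \<or> j = N'" using ij by auto
        thus ?thesis using colQ rowQ by auto
      next
        case False thus ?thesis using zQN by (simp add: czero_def)
      qed
    qed
    have "cmul N' Q Q = cmul ?N Q Q"
      by (rule cmul_shrink_left[symmetric]) (use zQ in \<open>auto simp: czero_def\<close>)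
    hence "cproj N' Q" unfolding cproj_def using zQ QQ sQ by simp
    then obtain U' r' where U': "cunit N' U'" "r' \<le> N'" "cmul N' (cmul N' U' Q) (cstar U') = cid r'"
      using Suc.IH by blast
    define U where "U = cmul ?N (ext1 N' U') H"
    have uU: "cunit ?N U" unfolding U_def by (rule cunit_mult[OF ext1_unit[OF U'(1)] H(1)])
    have "cmul ?N (cmul ?N U P) (cstar U) = cmul ?N (cmul ?N (ext1 N' U') Q) (cstar (ext1 N' U'))"
      unfolding U_def Q_def by (simp add: cstar_cmul H(2) cmul_assoc)
    also have "\<dots> = cid r'" unfolding ext1_conj[OF zQ] U'(3) ..
    finally show ?thesis using uU U'(2) by (metis le_SucI)
  qed
qed

lemma proj_trace:
  assumes "cproj N P"
  shows "\<exists>r. r \<le> N \<and> ctr N P = of_nat r"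
proof -
  obtain U r where U: "cunit N U" "r \<le> N" "cmul N (cmul N U P) (cstar U) = cid r"
    using diag_proj[OF assms] by blast
  have zP: "czero N P" using assms unfolding cproj_def by simp
  have "ctr N P = ctr N (cmul N (cstar U) (cmul N U P))" using cunit_cancel(1)[OF U(1) zP] by simp
  also have "\<dots> = ctr N (cmul N (cmul N U P) (cstar U))" by (rule ctr_cmul_comm)
  also have "\<dots> = of_nat r" unfolding U(3) using U(2) by (rule ctr_cid)
  finally show ?thesis using U(2) by blast
qed

lemma proj_equal_trace:
  assumes P: "cproj K P" and Q: "cproj K Q" and tr: "ctr K P = ctr K Q"
  shows "\<exists>W. cunit K W \<and> P = cmul K (cmul K W Q) (cstar W)"
proof -
  obtain U r where U: "cunit K U" "r \<le> K" "cmul K (cmul K U P) (cstar U) = cid r"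
    using diag_proj[OF P] by blast
  obtain V r' where V: "cunit K V" "r' \<le> K" "cmul K (cmul K V Q) (cstar V) = cid r'"
    using diag_proj[OF Q] by blast
  have zP: "czero K P" using P unfolding cproj_def by simp
  have zQ: "czero K Q" using Q unfolding cproj_def by simp
  have zU: "czero K U" using U(1) unfolding cunit_def by simp
  have zV: "czero K V" using V(1) unfolding cunit_def by simp
  have trP: "ctr K P = of_nat r"
  proof -
    have "ctr K P = ctr K (cmul K (cstar U) (cmul K U P))" using cunit_cancel(1)[OF U(1) zP] by simp
    also have "\<dots> = ctr K (cmul K (cmul K U P) (cstar U))" by (rule ctr_cmul_comm)
    also have "\<dots> = of_nat r" unfolding U(3) using U(2) by (rule ctr_cid)
    finally show ?thesis .
  qed
  have trQ: "ctr K Q = of_nat r'"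
  proof -
    have "ctr K Q = ctr K (cmul K (cstar V) (cmul K V Q))" using cunit_cancel(1)[OF V(1) zQ] by simp
    also have "\<dots> = ctr K (cmul K (cmul K V Q) (cstar V))" by (rule ctr_cmul_comm)
    also have "\<dots> = of_nat r'" unfolding V(3) using V(2) by (rule ctr_cid)
    finally show ?thesis .
  qed
  have rr: "r = r'" using tr trP trQ by simp
  define W where "W = cmul K (cstar U) V"
  have uW: "cunit K W" unfolding W_def by (rule cunit_mult[OF cunit_star[OF U(1)] V(1)])
  have zPU: "czero K (cmul K P (cstar U))" using zP zU by (simp add: czero_cmul czero_cstar)
  have "cmul K (cmul K W Q) (cstar W) = cmul K (cstar U) (cmul K (cmul K (cmul K V Q) (cstar V)) U)"
    unfolding W_def by (simp add: cstar_cmul cmul_assoc)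
  also have "\<dots> = cmul K (cstar U) (cmul K (cmul K (cmul K U P) (cstar U)) U)"
    unfolding V(3) U(3) rr ..
  also have "\<dots> = cmul K (cstar U) (cmul K U (cmul K (cmul K P (cstar U)) U))"
    by (simp add: cmul_assoc)
  also have "\<dots> = cmul K (cmul K P (cstar U)) U" by (rule cunit_cancel(1)[OF U(1)]) (simp add: czero_cmul zPU zU)
  also have "\<dots> = P" by (rule cunit_cancel(4)[OF U(1) zP])
  finally show ?thesis using uW by metis
qed


definition rk :: "nat \<times> nc_mat \<Rightarrow> complex" where
  "rk p = ctr (fst p) (pc (snd p))"

lemma proj_rk_nat:
  assumes "p \<in> projectors n \<Theta>"
  shows "\<exists>r::nat. rk p = of_nat r"
proof -
  obtain N P where p: "p = (N, P)" by fastforce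
  have "cproj N (pc P)" using projector_const(2) assms unfolding p by blast
  thus ?thesis using proj_trace unfolding rk_def p by auto
qed

lemma proj_equiv_iff:
  assumes p: "p \<in> projectors n \<Theta>" and q: "q \<in> projectors n \<Theta>"
  shows "proj_equiv n \<Theta> p q \<longleftrightarrow> rk p = rk q"
proof -
  obtain N P where pe: "p = (N, P)" by fastforce
  obtain M Q where qe: "q = (M, Q)" by fastforce
  define A where "A = pc P"
  define B where "B = pc Q"
  have PA: "P = cm A" and cA: "cproj N A" using projector_const[of N P n \<Theta>] p unfolding pe A_def by auto
  have QB: "Q = cm B" and cB: "cproj M B" using projector_const[of M Q n \<Theta>] q unfolding qe B_def by auto
  have zA: "czero N A" using cA unfolding cproj_def by simp
  have zB: "czero M B" using cB unfolding cproj_def by simp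
  show ?thesis
  proof
    assume "proj_equiv n \<Theta> p q"
    then obtain K U where K: "N \<le> K" "M \<le> K" and U: "is_unitary n \<Theta> K U"
      and eq: "P = mat_mult n \<Theta> K (mat_mult n \<Theta> K U Q) (mat_star n \<Theta> U)"
      unfolding proj_equiv_def pe qe by auto
    define C where "C = pc U"
    have UC: "U = cm C" and cC: "cunit K C" using unitary_const[OF U] unfolding C_def by auto
    have "cm A = cm (cmul K (cmul K C B) (cstar C))"
      using eq unfolding PA QB UC mat_mult_cm mat_star_cm .
    hence AA: "A = cmul K (cmul K C B) (cstar C)" unfolding cm_inj .
    have "rk p = ctr N A" unfolding rk_def pe A_def by simp
    also have "\<dots> = ctr K A" by (rule ctr_mono[OF zA K(1), symmetric])
    also have "\<dots> = ctr K (cmul K (cstar C) (cmul K C B))" unfolding AA by (rule ctr_cmul_comm)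
    also have "\<dots> = ctr K B" using cunit_cancel(1)[OF cC czero_mono[OF zB K(2)]] by simp
    also have "\<dots> = ctr M B" by (rule ctr_mono[OF zB K(2)])
    also have "\<dots> = rk q" unfolding rk_def qe B_def by simp
    finally show "rk p = rk q" .
  next
    assume r: "rk p = rk q"
    define K where "K = max N M"
    have K: "N \<le> K" "M \<le> K" unfolding K_def by auto
    have cA': "cproj K A" by (rule cproj_mono[OF cA K(1)])
    have cB': "cproj K B" by (rule cproj_mono[OF cB K(2)])
    have "ctr N A = ctr M B" using r unfolding rk_def pe qe A_def B_def by simp
    hence "ctr K A = ctr K B" by (simp add: ctr_mono[OF zA K(1)] ctr_mono[OF zB K(2)])
    then obtain W where W: "cunit K W" "A = cmul K (cmul K W B) (cstar W)"
      using proj_equal_trace[OF cA' cB'] by blast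
    have "is_unitary n \<Theta> K (cm W)" by (rule unitary_cm[OF W(1)])
    moreover have "P = mat_mult n \<Theta> K (mat_mult n \<Theta> K (cm W) Q) (mat_star n \<Theta> (cm W))"
      unfolding PA QB mat_mult_cm mat_star_cm W(2)[symmetric] ..
    ultimately show "proj_equiv n \<Theta> p q" unfolding proj_equiv_def pe qe using K by auto
  qed
qed

lemma sum_lessThan_add: fixes N M :: nat shows "(\<Sum>l<N+M. f l) = (\<Sum>l<N. f l) + (\<Sum>l<M. f (N + l))"
  by (induction M) (simp_all add: add.assoc)

definition blk :: "nat \<Rightarrow> nat \<Rightarrow> cmat \<Rightarrow> cmat \<Rightarrow> cmat" where
  "blk N M A B = (\<lambda>i j. if i < N \<and> j < N then A i j
      else if N \<le> i \<and> i < N + M \<and> N \<le> j \<and> j < N + M then B (i - N) (j - N) else 0)"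

lemma proj_sum_cm: "proj_sum (N, cm A) (M, cm B) = (N + M, cm (blk N M A B))"
  unfolding proj_sum_def cm_def blk_def by (auto simp: fun_eq_iff nc_zero_cst)

lemma blk_cproj:
  assumes cA: "cproj N A" and cB: "cproj M B"
  shows "cproj (N + M) (blk N M A B)"
proof -
  have zA: "czero N A" and AA: "cmul N A A = A" and sA: "cstar A = A" using cA unfolding cproj_def by auto
  have zB: "czero M B" and BB: "cmul M B B = B" and sB: "cstar B = B" using cB unfolding cproj_def by auto
  let ?X = "blk N M A B"
  have z: "czero (N + M) ?X" unfolding czero_def blk_def by auto
  have s: "cstar ?X = ?X"
  proof (intro ext)
    fix i j
    have "cnj (A j i) = A i j" using sA unfolding cstar_def by metis
    moreover have "cnj (B j i) = B i j" for i j using sB unfolding cstar_def by metis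
    ultimately show "cstar ?X i j = ?X i j" unfolding cstar_def blk_def by auto
  qed
  have m: "cmul (N + M) ?X ?X = ?X"
  proof (intro ext)
    fix i j
    have split: "cmul (N + M) ?X ?X i j = (\<Sum>l<N. ?X i l * ?X l j) + (\<Sum>l<M. ?X i (N + l) * ?X (N + l) j)"
      unfolding cmul_def by (rule sum_lessThan_add)
    show "cmul (N + M) ?X ?X i j = ?X i j"
    proof (cases "i < N")
      case True
      have "(\<Sum>l<M. ?X i (N + l) * ?X (N + l) j) = 0" using True by (simp add: blk_def)
      moreover have "(\<Sum>l<N. ?X i l * ?X l j) = ?X i j"
      proof (cases "j < N")
        case True
        have "(\<Sum>l<N. ?X i l * ?X l j) = (\<Sum>l<N. A i l * A l j)" using \<open>i < N\<close> True by (simp add: blk_def)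
        also have "\<dots> = cmul N A A i j" unfolding cmul_def ..
        also have "\<dots> = ?X i j" using AA \<open>i < N\<close> True by (simp add: blk_def)
        finally show ?thesis .
      next
        case False thus ?thesis using \<open>i < N\<close> by (simp add: blk_def)
      qed
      ultimately show ?thesis using split by simp
    next
      case iN: False
      have "(\<Sum>l<N. ?X i l * ?X l j) = 0" using iN by (simp add: blk_def)
      moreover have "(\<Sum>l<M. ?X i (N + l) * ?X (N + l) j) = ?X i j"
      proof (cases "i < N + M \<and> N \<le> j \<and> j < N + M")
        case True
        have "(\<Sum>l<M. ?X i (N + l) * ?X (N + l) j) = (\<Sum>l<M. B (i - N) l * B l (j - N))"
          using iN True by (intro sum.cong) (auto simp: blk_def)
        also have "\<dots> = cmul M B B (i - N) (j - N)" unfolding cmul_def ..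
        also have "\<dots> = ?X i j" using BB iN True by (simp add: blk_def)
        finally show ?thesis .
      next
        case False
        have t: "?X i (N + l) * ?X (N + l) j = 0" for l using iN False by (auto simp: blk_def)
        have "(\<Sum>l<M. ?X i (N + l) * ?X (N + l) j) = 0" by (rule sum.neutral) (use t in blast)
        moreover have "?X i j = 0" using iN False unfolding blk_def by auto
        ultimately show ?thesis by simp
      qed
      ultimately show ?thesis using split by simp
    qed
  qed
  show ?thesis unfolding cproj_def using z s m by simp
qed

lemma blk_ctr: "ctr (N + M) (blk N M A B) = ctr N A + ctr M B"
  unfolding ctr_def sum_lessThan_add by (simp add: blk_def)

lemma proj_sum_props:
  assumes p: "p \<in> projectors n \<Theta>" and q: "q \<in> projectors n \<Theta>"
  shows "proj_sum p q \<in> projectors n \<Theta>" "rk (proj_sum p q) = rk p + rk q"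
proof -
  obtain N P where pe: "p = (N, P)" by fastforce
  obtain M Q where qe: "q = (M, Q)" by fastforce
  define A where "A = pc P"
  define B where "B = pc Q"
  have PA: "P = cm A" and cA: "cproj N A" using projector_const[of N P n \<Theta>] p unfolding pe A_def by auto
  have QB: "Q = cm B" and cB: "cproj M B" using projector_const[of M Q n \<Theta>] q unfolding qe B_def by auto
  have e: "proj_sum p q = (N + M, cm (blk N M A B))" unfolding pe qe PA QB proj_sum_cm ..
  show "proj_sum p q \<in> projectors n \<Theta>" unfolding e by (rule projector_cm[OF blk_cproj[OF cA cB]])
  have "rk (proj_sum p q) = ctr (N + M) (blk N M A B)" unfolding e rk_def by (simp add: pc_cm)
  also have "\<dots> = ctr N A + ctr M B" by (rule blk_ctr)
  also have "ctr N A = rk p" unfolding rk_def pe A_def by simp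
  also have "ctr M B = rk q" unfolding rk_def qe B_def by simp
  finally show "rk (proj_sum p q) = rk p + rk q" .
qed

lemma proj_zero_props: "proj_zero \<in> projectors n \<Theta>" "rk proj_zero = 0"
proof -
  have e: "proj_zero = (0, cm (\<lambda>_ _. 0))" unfolding proj_zero_def cm_def by (simp add: nc_zero_cst)
  have "cproj 0 (\<lambda>_ _. 0)" unfolding cproj_def czero_def cmul_def cstar_def by (simp add: fun_eq_iff)
  thus "proj_zero \<in> projectors n \<Theta>" unfolding e by (rule projector_cm)
  show "rk proj_zero = 0" unfolding e rk_def ctr_def by simp
qed

lemma dproj_props: "(r, cm (cid r)) \<in> projectors n \<Theta>" "rk (r, cm (cid r)) = of_nat r"
proof -
  show "(r, cm (cid r)) \<in> projectors n \<Theta>" by (rule projector_cm[OF cproj_cid[OF order_refl]])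
  show "rk (r, cm (cid r)) = of_nat r" unfolding rk_def by (simp add: pc_cm ctr_cid)
qed


definition val :: "(nat \<times> nc_mat) \<times> (nat \<times> nc_mat) \<Rightarrow> complex" where
  "val x = rk (fst x) - rk (snd x)"

definition iv :: "(nat \<times> nc_mat) \<times> (nat \<times> nc_mat) \<Rightarrow> int" where
  "iv x = \<lfloor>Re (val x)\<rfloor>"

lemma val_int:
  assumes "x \<in> projectors n \<Theta> \<times> projectors n \<Theta>"
  shows "val x = of_int (iv x)"
proof -
  obtain r where r: "rk (fst x) = of_nat r" using proj_rk_nat assms by (metis mem_Times_iff)
  obtain s where s: "rk (snd x) = of_nat s" using proj_rk_nat assms by (metis mem_Times_iff)
  have "val x = of_int (int r - int s)" unfolding val_def r s by simp
  moreover have "iv x = int r - int s"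
  proof -
    have "Re (val x) = real_of_int (int r - int s)" unfolding val_def r s by simp
    thus ?thesis unfolding iv_def by (simp only: floor_of_int)
  qed
  ultimately show ?thesis by simp
qed

lemma K0_rel_iff:
  "(x, y) \<in> K0_rel n \<Theta> \<longleftrightarrow>
     x \<in> projectors n \<Theta> \<times> projectors n \<Theta> \<and> y \<in> projectors n \<Theta> \<times> projectors n \<Theta> \<and> iv x = iv y"
proof -
  obtain a b where x: "x = (a, b)" by (cases x) blast
  obtain c d where y: "y = (c, d)" by (cases y) blast
  let ?Pr = "projectors n \<Theta>"
  have mem: "(x, y) \<in> K0_rel n \<Theta> \<longleftrightarrow> a \<in> ?Pr \<and> b \<in> ?Pr \<and> c \<in> ?Pr \<and> d \<in> ?Pr \<and>
      (\<exists>e\<in>?Pr. proj_equiv n \<Theta> (proj_sum (proj_sum a d) e) (proj_sum (proj_sum c b) e))"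
    unfolding K0_rel_def x y by simp
  show ?thesis
  proof
    assume H: "(x, y) \<in> K0_rel n \<Theta>"
    hence P: "a \<in> ?Pr" "b \<in> ?Pr" "c \<in> ?Pr" "d \<in> ?Pr" using mem by auto
    obtain e where e: "e \<in> ?Pr" "proj_equiv n \<Theta> (proj_sum (proj_sum a d) e) (proj_sum (proj_sum c b) e)"
      using H mem by auto
    have ad: "proj_sum a d \<in> ?Pr" by (rule proj_sum_props(1)[OF P(1) P(4)])
    have cb: "proj_sum c b \<in> ?Pr" by (rule proj_sum_props(1)[OF P(3) P(2)])
    have "rk (proj_sum (proj_sum a d) e) = rk (proj_sum (proj_sum c b) e)"
      using e(2) proj_equiv_iff[OF proj_sum_props(1)[OF ad e(1)] proj_sum_props(1)[OF cb e(1)]] by simp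
    hence "rk a + rk d + rk e = rk c + rk b + rk e"
      unfolding proj_sum_props(2)[OF ad e(1)] proj_sum_props(2)[OF cb e(1)]
        proj_sum_props(2)[OF P(1) P(4)] proj_sum_props(2)[OF P(3) P(2)] .
    hence "val x = val y" unfolding val_def x y by (simp add: algebra_simps)
    moreover have "x \<in> ?Pr \<times> ?Pr" "y \<in> ?Pr \<times> ?Pr" using P x y by auto
    ultimately show "x \<in> ?Pr \<times> ?Pr \<and> y \<in> ?Pr \<times> ?Pr \<and> iv x = iv y"
      using val_int[of x n \<Theta>] val_int[of y n \<Theta>] by simp
  next
    assume H: "x \<in> ?Pr \<times> ?Pr \<and> y \<in> ?Pr \<times> ?Pr \<and> iv x = iv y"
    hence P: "a \<in> ?Pr" "b \<in> ?Pr" "c \<in> ?Pr" "d \<in> ?Pr" using x y by auto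
    have "val x = val y" using H val_int[of x n \<Theta>] val_int[of y n \<Theta>] by simp
    hence r: "rk a + rk d = rk c + rk b" unfolding val_def x y by (simp add: algebra_simps)
    have z: "proj_zero \<in> ?Pr" "rk proj_zero = 0" using proj_zero_props by auto
    have ad: "proj_sum a d \<in> ?Pr" by (rule proj_sum_props(1)[OF P(1) P(4)])
    have cb: "proj_sum c b \<in> ?Pr" by (rule proj_sum_props(1)[OF P(3) P(2)])
    have s1: "proj_sum (proj_sum a d) proj_zero \<in> ?Pr" "proj_sum (proj_sum c b) proj_zero \<in> ?Pr"
      using proj_sum_props(1)[OF ad z(1)] proj_sum_props(1)[OF cb z(1)] by auto
    have "rk (proj_sum (proj_sum a d) proj_zero) = rk (proj_sum (proj_sum c b) proj_zero)"
      unfolding proj_sum_props(2)[OF ad z(1)] proj_sum_props(2)[OF cb z(1)]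
        proj_sum_props(2)[OF P(1) P(4)] proj_sum_props(2)[OF P(3) P(2)] using r z(2) by simp
    hence "proj_equiv n \<Theta> (proj_sum (proj_sum a d) proj_zero) (proj_sum (proj_sum c b) proj_zero)"
      using proj_equiv_iff[OF s1] by simp
    thus "(x, y) \<in> K0_rel n \<Theta>" using mem P z by blast
  qed
qed

definition cls :: "nat \<Rightarrow> (nat \<Rightarrow> nat \<Rightarrow> real) \<Rightarrow> int \<Rightarrow> ((nat \<times> nc_mat) \<times> (nat \<times> nc_mat)) set" where
  "cls n \<Theta> z = {y \<in> projectors n \<Theta> \<times> projectors n \<Theta>. iv y = z}"

lemma class_eq: "x \<in> projectors n \<Theta> \<times> projectors n \<Theta> \<Longrightarrow> K0_rel n \<Theta> `` {x} = cls n \<Theta> (iv x)"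
  unfolding cls_def using K0_rel_iff by fastforce

lemma cls_ne: "\<exists>x. x \<in> cls n \<Theta> z"
proof (cases "z \<ge> 0")
  case True
  let ?x = "((nat z, cm (cid (nat z))), proj_zero)"
  have "?x \<in> projectors n \<Theta> \<times> projectors n \<Theta>" using dproj_props proj_zero_props by auto
  moreover have "val ?x = of_nat (nat z)" unfolding val_def using dproj_props proj_zero_props by simp
  hence "iv ?x = z" unfolding iv_def using True by simp
  ultimately show ?thesis unfolding cls_def by blast
next
  case False
  let ?x = "(proj_zero, (nat (-z), cm (cid (nat (-z)))))"
  have "?x \<in> projectors n \<Theta> \<times> projectors n \<Theta>" using dproj_props proj_zero_props by auto
  moreover have "val ?x = - of_nat (nat (-z))" unfolding val_def using dproj_props proj_zero_props by simp
  hence "iv ?x = z" unfolding iv_def using False by simp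
  ultimately show ?thesis unfolding cls_def by blast
qed

lemma carrier_K0: "carrier (K0 n \<Theta>) = range (cls n \<Theta>)"
proof -
  have "carrier (K0 n \<Theta>) = (\<Union>x\<in>projectors n \<Theta> \<times> projectors n \<Theta>. {K0_rel n \<Theta> `` {x}})"
    unfolding K0_def quotient_def by simp
  also have "\<dots> = range (cls n \<Theta>)"
  proof
    show "(\<Union>x\<in>projectors n \<Theta> \<times> projectors n \<Theta>. {K0_rel n \<Theta> `` {x}}) \<subseteq> range (cls n \<Theta>)"
      using class_eq by blast
    show "range (cls n \<Theta>) \<subseteq> (\<Union>x\<in>projectors n \<Theta> \<times> projectors n \<Theta>. {K0_rel n \<Theta> `` {x}})"
    proof
      fix X assume "X \<in> range (cls n \<Theta>)"
      then obtain z where X: "X = cls n \<Theta> z" by blast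
      obtain x where "x \<in> cls n \<Theta> z" using cls_ne by blast
      hence "x \<in> projectors n \<Theta> \<times> projectors n \<Theta>" "iv x = z" unfolding cls_def by auto
      thus "X \<in> (\<Union>x\<in>projectors n \<Theta> \<times> projectors n \<Theta>. {K0_rel n \<Theta> `` {x}})"
        unfolding X using class_eq by blast
    qed
  qed
  finally show ?thesis .
qed

definition hK :: "((nat \<times> nc_mat) \<times> (nat \<times> nc_mat)) set \<Rightarrow> int" where
  "hK X = iv (SOME y. y \<in> X)"

lemma hK_cls: "hK (cls n \<Theta> z) = z"
proof -
  have "(SOME y. y \<in> cls n \<Theta> z) \<in> cls n \<Theta> z" using cls_ne by (metis someI)
  thus ?thesis unfolding hK_def cls_def by simp
qed

lemma iv_sum:
  assumes "(a, b) \<in> projectors n \<Theta> \<times> projectors n \<Theta>" "(c, d) \<in> projectors n \<Theta> \<times> projectors n \<Theta>"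
  shows "(proj_sum a c, proj_sum b d) \<in> projectors n \<Theta> \<times> projectors n \<Theta>"
    "iv (proj_sum a c, proj_sum b d) = iv (a, b) + iv (c, d)"
proof -
  have P: "a \<in> projectors n \<Theta>" "b \<in> projectors n \<Theta>" "c \<in> projectors n \<Theta>" "d \<in> projectors n \<Theta>"
    using assms by auto
  show S: "(proj_sum a c, proj_sum b d) \<in> projectors n \<Theta> \<times> projectors n \<Theta>"
    using proj_sum_props(1) P by auto
  have "val (proj_sum a c, proj_sum b d) = val (a, b) + val (c, d)"
    unfolding val_def using proj_sum_props(2) P by (simp add: algebra_simps)
  hence "of_int (iv (proj_sum a c, proj_sum b d)) = (of_int (iv (a, b) + iv (c, d)) :: complex)"
    using val_int[OF S] val_int[OF assms(1)] val_int[OF assms(2)] by simp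
  thus "iv (proj_sum a c, proj_sum b d) = iv (a, b) + iv (c, d)" by (metis of_int_eq_iff)
qed

lemma mult_cls: "cls n \<Theta> z1 \<otimes>\<^bsub>K0 n \<Theta>\<^esub> cls n \<Theta> z2 = cls n \<Theta> (z1 + z2)"
proof -
  define S where "S = {(proj_sum a c, proj_sum b d) | a b c d. (a, b) \<in> cls n \<Theta> z1 \<and> (c, d) \<in> cls n \<Theta> z2}"
  have m: "cls n \<Theta> z1 \<otimes>\<^bsub>K0 n \<Theta>\<^esub> cls n \<Theta> z2 = K0_rel n \<Theta> `` S"
    unfolding K0_def S_def by simp
  have Sprop: "s \<in> projectors n \<Theta> \<times> projectors n \<Theta> \<and> iv s = z1 + z2" if sS: "s \<in> S" for s
  proof -
    obtain a b c d where s: "s = (proj_sum a c, proj_sum b d)" "(a, b) \<in> cls n \<Theta> z1" "(c, d) \<in> cls n \<Theta> z2"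
      using sS unfolding S_def by blast
    have "(a, b) \<in> projectors n \<Theta> \<times> projectors n \<Theta>" "iv (a, b) = z1"
      "(c, d) \<in> projectors n \<Theta> \<times> projectors n \<Theta>" "iv (c, d) = z2" using s unfolding cls_def by auto
    thus ?thesis using iv_sum s(1) by metis
  qed
  obtain x1 where x1: "x1 \<in> cls n \<Theta> z1" using cls_ne by blast
  obtain x2 where x2: "x2 \<in> cls n \<Theta> z2" using cls_ne by blast
  obtain a b where ab: "x1 = (a, b)" by (cases x1) blast
  obtain c d where cd: "x2 = (c, d)" by (cases x2) blast
  have s0: "(proj_sum a c, proj_sum b d) \<in> S" unfolding S_def using x1 x2 ab cd by blast
  have "K0_rel n \<Theta> `` S = cls n \<Theta> (z1 + z2)"
  proof
    show "K0_rel n \<Theta> `` S \<subseteq> cls n \<Theta> (z1 + z2)"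
    proof
      fix y assume "y \<in> K0_rel n \<Theta> `` S"
      then obtain s where "s \<in> S" "(s, y) \<in> K0_rel n \<Theta>" by blast
      thus "y \<in> cls n \<Theta> (z1 + z2)" unfolding cls_def using Sprop K0_rel_iff by fastforce
    qed
    show "cls n \<Theta> (z1 + z2) \<subseteq> K0_rel n \<Theta> `` S"
    proof
      fix y assume y: "y \<in> cls n \<Theta> (z1 + z2)"
      have "((proj_sum a c, proj_sum b d), y) \<in> K0_rel n \<Theta>"
        unfolding K0_rel_iff using Sprop[OF s0] y unfolding cls_def by auto
      thus "y \<in> K0_rel n \<Theta> `` S" using s0 by blast
    qed
  qed
  thus ?thesis unfolding m .
qed

theorem K0_iso: "K0 n \<Theta> \<cong> integer_group"
proof -
  have "hK \<in> iso (K0 n \<Theta>) integer_group"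
    unfolding iso_def hom_def
  proof (intro CollectI conjI)
    show "hK \<in> carrier (K0 n \<Theta>) \<rightarrow> carrier integer_group" by simp
    show "\<forall>x\<in>carrier (K0 n \<Theta>). \<forall>y\<in>carrier (K0 n \<Theta>).
        hK (x \<otimes>\<^bsub>K0 n \<Theta>\<^esub> y) = hK x \<otimes>\<^bsub>integer_group\<^esub> hK y"
      unfolding carrier_K0 by (auto simp: mult_cls hK_cls)
    show "bij_betw hK (carrier (K0 n \<Theta>)) (carrier integer_group)"
      unfolding carrier_K0 bij_betw_def
    proof
      show "inj_on hK (range (cls n \<Theta>))" by (rule inj_onI) (auto simp: hK_cls)
      show "hK ` range (cls n \<Theta>) = carrier integer_group"
        by (auto simp: hK_cls image_iff)
    qed
  qed
  thus ?thesis unfolding is_iso_def by blast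
qed


theorem theorem1p1:
  fixes n :: nat and \<Theta> :: "nat \<Rightarrow> nat \<Rightarrow> real"
  assumes "n \<ge> 1" and "admissible n \<Theta>"
  shows "K0 n \<Theta> \<cong> integer_group"
  by (rule K0_iso)

end
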